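(* Let $k$ be a field of characteristic $0$. Let $p\geq 2$ and let $n_0<n_1<\cdots<n_p$ be positive integers with $n_i=n_0+id$ for $i\in[1,p]$ and a fixed positive integer $d$, such that $\gcd(n_0,\dots,n_p)=1$ and $\{n_0,\dots,n_p\}$ minimally generates the numerical semigroup $\langle n_0,\dots,n_p\rangle$. Let $S=\langle (0,n_p),(n_0,n_p-n_0),(n_1,n_p-n_1),\dots,(n_{p-1},n_p-n_{p-1}),(n_p,0)\rangle\subseteq\mathbb{N}^2$, and write $n_0=ap+b$ with integers $a\ge0$, $0\leq b<p$. Then: \begin{enumerate} \item If $b=0$, $\mathrm{Der}_k(k[S])$ is minimally generated by $\left\{u\frac{\partial}{\partial u},\ t^{an_p+d}u^{(d-1)(n_p-1)}\frac{\partial}{\partial u},\ t\frac{\partial}{\partial t},\ t^{an_p-n_{p-i}+1}u^{d(n_p-i)}\frac{\partial}{\partial t}\ (1\leq i\leq p-1)\right\}$. \item If $b=1$, $\mathrm{Der}_k(k[S])$ is minimally generated by $\left\{u\frac{\partial}{\partial u},\ t^{an_p+d}u^{(d-1)(n_p-1)}\frac{\partial}{\partial u},\ t\frac{\partial}{\partial t},\ t^{an_p-n_{p-i}+1}u^{d(n_p-i)}\frac{\partial}{\partial t}\ (1\leq i\leq p)\right\}$. \item If $b\neq 0,1$, $\mathrm{Der}_k(k[S])$ is minimally generated by $\left\{u\frac{\partial}{\partial u},\ t^{(a+1)n_p+d}u^{(d-1)(n_p-1)}\frac{\partial}{\partial u},\ t\frac{\partial}{\partial t},\ t^{an_p+id+1}u^{d(n_p-i)}\frac{\partial}{\partial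 t}\ (1\leq i\leq b-1)\right\}$. \end{enumerate}
   Context: $k[S]=\bigoplus_{(s_1,s_2)\in S}k\,t^{s_1}u^{s_2}\subseteq k[t,u]$ is the semigroup ring of $S$ (first coordinate = exponent of $t$, second = exponent of $u$). $\mathrm{Der}_k(k[S])$ is the $k[S]$-module of $k$-derivations of $k[S]$; each extends uniquely to $k(t,u)$ and is written $f\frac{\partial}{\partial t}+g\frac{\partial}{\partial u}$. "Minimally generated" refers to a minimal generating set as a $k[S]$-module. *)

theory Defs
  imports Main "HOL-Library.Poly_Mapping" "HOL-Library.Product_Plus"
begin

text \<open>Polynomials in two variables t, u over k: finitely supported functions
  from exponent pairs (exponent of t, exponent of u) to k, with convolution product.\<close>
type_synonym 'k pol2 = "(nat \<times> nat) \<Rightarrow>\<^sub>0 'k"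

inductive_set sgrp_gen :: "'a::monoid_add set \<Rightarrow> 'a set" for G where
  zero: "0 \<in> sgrp_gen G"
| gen: "g \<in> G \<Longrightarrow> g \<in> sgrp_gen G"
| add: "x \<in> sgrp_gen G \<Longrightarrow> y \<in> sgrp_gen G \<Longrightarrow> x + y \<in> sgrp_gen G"

definition semigroup_ring :: "(nat \<times> nat) set \<Rightarrow> 'k::field pol2 set" where
  "semigroup_ring S = {f. Poly_Mapping.keys f \<subseteq> S}"

definition mon :: "nat \<Rightarrow> nat \<Rightarrow> 'k::field pol2" where
  "mon a b = Poly_Mapping.single (a, b) 1"

definition const :: "'k::field \<Rightarrow> 'k pol2" where
  "const c = Poly_Mapping.single (0, 0) c"

definition partial_t :: "'k::field pol2 \<Rightarrow> 'k pol2" where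
  "partial_t f = (\<Sum>m\<in>Poly_Mapping.keys f. Poly_Mapping.single (fst m - 1, snd m) (of_nat (fst m) * Poly_Mapping.lookup f m))"

definition partial_u :: "'k::field pol2 \<Rightarrow> 'k pol2" where
  "partial_u f = (\<Sum>m\<in>Poly_Mapping.keys f. Poly_Mapping.single (fst m, snd m - 1) (of_nat (snd m) * Poly_Mapping.lookup f m))"

definition vf_t :: "nat \<Rightarrow> nat \<Rightarrow> 'k::field pol2 \<Rightarrow> 'k pol2" where
  "vf_t a b f = mon a b * partial_t f"

definition vf_u :: "nat \<Rightarrow> nat \<Rightarrow> 'k::field pol2 \<Rightarrow> 'k pol2" where
  "vf_u a b f = mon a b * partial_u f"

text \<open>Der_k(k[S]): k-linear derivations of k[S] (maps considered on k[S] only).\<close>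
definition Der :: "(nat \<times> nat) set \<Rightarrow> ('k::field pol2 \<Rightarrow> 'k pol2) set" where
  "Der S = {D. (\<forall>x\<in>semigroup_ring S. D x \<in> semigroup_ring S)
     \<and> (\<forall>x\<in>semigroup_ring S. \<forall>y\<in>semigroup_ring S.
          D (x + y) = D x + D y \<and> D (x * y) = x * D y + y * D x)
     \<and> (\<forall>c. \<forall>x\<in>semigroup_ring S. D (const c * x) = const c * D x)}"

definition generates_Der :: "(nat \<times> nat) set \<Rightarrow> ('k::field pol2 \<Rightarrow> 'k pol2) set \<Rightarrow> bool" where
  "generates_Der S G \<longleftrightarrow> (\<forall>D\<in>Der S. \<exists>r. (\<forall>g\<in>G. r g \<in> semigroup_ring S) \<and>
       (\<forall>x\<in>semigroup_ring S. D x = (\<Sum>g\<in>G. r g * g x)))"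

definition minimally_generates_Der :: "(nat \<times> nat) set \<Rightarrow> ('k::field pol2 \<Rightarrow> 'k pol2) set \<Rightarrow> bool" where
  "minimally_generates_Der S G \<longleftrightarrow> finite G \<and> G \<subseteq> Der S \<and> generates_Der S G
     \<and> (\<forall>H. H \<subset> G \<longrightarrow> \<not> generates_Der S H)"

end

theory Submission
  imports Defs
begin

definition shift :: "nat \<times> nat \<Rightarrow> int \<times> int \<Rightarrow> int \<times> int" where
  "shift s w = (int (fst s) + fst w, int (snd s) + snd w)"
definition nn :: "int \<times> int \<Rightarrow> nat \<times> nat" where "nn v = (nat (fst v), nat (snd v))"
definition nonneg :: "int \<times> int \<Rightarrow> bool" where "nonneg v \<longleftrightarrow> fst v \<ge> 0 \<and> snd v \<ge> 0"
definition inSi :: "(nat \<times> nat) set \<Rightarrow> int \<times> int \<Rightarrow> bool" where "inSi S v \<longleftrightarrow> nonneg v \<and> nn v \<in> S"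
definition tvalid :: "(nat \<times> nat) set \<Rightarrow> int \<times> int \<Rightarrow> bool" where
  "tvalid S w \<longleftrightarrow> (\<forall>s\<in>S. fst s > 0 \<longrightarrow> inSi S (shift s w))"
definition uvalid :: "(nat \<times> nat) set \<Rightarrow> int \<times> int \<Rightarrow> bool" where
  "uvalid S w \<longleftrightarrow> (\<forall>s\<in>S. snd s > 0 \<longrightarrow> inSi S (shift s w))"

abbreviation X :: "nat \<times> nat \<Rightarrow> 'k::field pol2" where "X s \<equiv> Poly_Mapping.single s 1"

lemma pm_expand: "f = (\<Sum>k\<in>Poly_Mapping.keys f. Poly_Mapping.single k (Poly_Mapping.lookup f k))"
proof (rule poly_mapping_eqI)
  fix v
  show "Poly_Mapping.lookup f v = Poly_Mapping.lookup (\<Sum>k\<in>Poly_Mapping.keys f. Poly_Mapping.single k (Poly_Mapping.lookup f k)) v"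
    by (cases "v \<in> Poly_Mapping.keys f")
       (auto simp: lookup_sum lookup_single when_def in_keys_iff)
qed

lemma lookup_single_mult:
  fixes F :: "'k::field pol2"
  shows "Poly_Mapping.lookup (Poly_Mapping.single q c * F) v =
    (if fst q \<le> fst v \<and> snd q \<le> snd v then c * Poly_Mapping.lookup F (fst v - fst q, snd v - snd q) else 0)"
proof -
  have "Poly_Mapping.single q c * F = (\<Sum>k\<in>Poly_Mapping.keys F. Poly_Mapping.single (q + k) (c * Poly_Mapping.lookup F k))"
    by (subst pm_expand[of F]) (simp add: sum_distrib_left mult_single)
  hence "Poly_Mapping.lookup (Poly_Mapping.single q c * F) v = (\<Sum>k\<in>Poly_Mapping.keys F. (if k = (fst v - fst q, snd v - snd q) \<and> fst q \<le> fst v \<and> snd q \<le> snd v then c * Poly_Mapping.lookup F k else 0))"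
    by (auto simp: lookup_sum lookup_single when_def prod_eq_iff intro!: sum.cong)
  also have "\<dots> = (if fst q \<le> fst v \<and> snd q \<le> snd v then c * Poly_Mapping.lookup F (fst v - fst q, snd v - snd q) else 0)"
    by (cases "fst q \<le> fst v \<and> snd q \<le> snd v"; cases "(fst v - fst q, snd v - snd q) \<in> Poly_Mapping.keys F")
       (auto simp: in_keys_iff)
  finally show ?thesis .
qed

lemma lookup_partial_t:
  "Poly_Mapping.lookup (partial_t f) (a, b) = of_nat (a + 1) * Poly_Mapping.lookup f (a + 1, b)"
proof -
  have "Poly_Mapping.lookup (partial_t f) (a, b) = (\<Sum>m\<in>Poly_Mapping.keys f.
      (if m = (a+1, b) then of_nat (a+1) * Poly_Mapping.lookup f (a+1,b) else 0))"
    unfolding partial_t_def lookup_sum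
  proof (rule sum.cong)
    fix m :: "nat \<times> nat" obtain x y where m: "m = (x,y)" by fastforce
    show "Poly_Mapping.lookup (Poly_Mapping.single (fst m - 1, snd m) (of_nat (fst m) * Poly_Mapping.lookup f m)) (a, b) =
      (if m = (a+1, b) then of_nat (a+1) * Poly_Mapping.lookup f (a+1,b) else 0)"
      unfolding m by (cases x) (auto simp: lookup_single when_def)
  qed simp
  also have "\<dots> = of_nat (a + 1) * Poly_Mapping.lookup f (a + 1, b)"
    by (cases "(a+1,b) \<in> Poly_Mapping.keys f") (auto simp: in_keys_iff)
  finally show ?thesis .
qed

lemma lookup_partial_u:
  "Poly_Mapping.lookup (partial_u f) (a, b) = of_nat (b + 1) * Poly_Mapping.lookup f (a, b + 1)"
proof -
  have "Poly_Mapping.lookup (partial_u f) (a, b) = (\<Sum>m\<in>Poly_Mapping.keys f.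
      (if m = (a, b+1) then of_nat (b+1) * Poly_Mapping.lookup f (a,b+1) else 0))"
    unfolding partial_u_def lookup_sum
  proof (rule sum.cong)
    fix m :: "nat \<times> nat" obtain x y where m: "m = (x,y)" by fastforce
    show "Poly_Mapping.lookup (Poly_Mapping.single (fst m, snd m - 1) (of_nat (snd m) * Poly_Mapping.lookup f m)) (a, b) =
      (if m = (a, b+1) then of_nat (b+1) * Poly_Mapping.lookup f (a,b+1) else 0)"
      unfolding m by (cases y) (auto simp: lookup_single when_def)
  qed simp
  also have "\<dots> = of_nat (b + 1) * Poly_Mapping.lookup f (a, b + 1)"
    by (cases "(a,b+1) \<in> Poly_Mapping.keys f") (auto simp: in_keys_iff)
  finally show ?thesis .
qed

lemma partial_t_add: "partial_t (f + g) = partial_t f + partial_t g"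
  by (rule poly_mapping_eqI) (auto simp: lookup_partial_t lookup_add algebra_simps)
lemma partial_u_add: "partial_u (f + g) = partial_u f + partial_u g"
  by (rule poly_mapping_eqI) (auto simp: lookup_partial_u lookup_add algebra_simps)
lemma partial_t_zero[simp]: "partial_t 0 = 0"
  by (rule poly_mapping_eqI) (auto simp: lookup_partial_t)
lemma partial_u_zero[simp]: "partial_u 0 = 0"
  by (rule poly_mapping_eqI) (auto simp: lookup_partial_u)
lemma partial_t_sum: "partial_t (\<Sum>k\<in>K. P k) = (\<Sum>k\<in>K. partial_t (P k))"
  by (induction K rule: infinite_finite_induct) (auto simp: partial_t_add)
lemma partial_u_sum: "partial_u (\<Sum>k\<in>K. P k) = (\<Sum>k\<in>K. partial_u (P k))"
  by (induction K rule: infinite_finite_induct) (auto simp: partial_u_add)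

lemma partial_t_single: "partial_t (Poly_Mapping.single (a, b) c) = Poly_Mapping.single (a - 1, b) (of_nat a * c)"
proof (rule poly_mapping_eqI)
  fix v :: "nat \<times> nat" obtain x y where v: "v = (x,y)" by fastforce
  show "Poly_Mapping.lookup (partial_t (Poly_Mapping.single (a, b) c)) v = Poly_Mapping.lookup (Poly_Mapping.single (a - 1, b) (of_nat a * c)) v"
    unfolding v lookup_partial_t by (cases a) (auto simp: lookup_single when_def)
qed
lemma partial_u_single: "partial_u (Poly_Mapping.single (a, b) c) = Poly_Mapping.single (a, b - 1) (of_nat b * c)"
proof (rule poly_mapping_eqI)
  fix v :: "nat \<times> nat" obtain x y where v: "v = (x,y)" by fastforce
  show "Poly_Mapping.lookup (partial_u (Poly_Mapping.single (a, b) c)) v = Poly_Mapping.lookup (Poly_Mapping.single (a, b - 1) (of_nat b * c)) v"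
    unfolding v lookup_partial_u by (cases b) (auto simp: lookup_single when_def)
qed

lemma partial_t_single': "partial_t (Poly_Mapping.single s c) = Poly_Mapping.single (fst s - 1, snd s) (of_nat (fst s) * c)"
  using partial_t_single[of "fst s" "snd s" c] by simp
lemma partial_u_single': "partial_u (Poly_Mapping.single s c) = Poly_Mapping.single (fst s, snd s - 1) (of_nat (snd s) * c)"
  using partial_u_single[of "fst s" "snd s" c] by simp

lemma partial_t_mult_single:
  fixes c c' :: "'k::field"
  shows "partial_t (Poly_Mapping.single k c * Poly_Mapping.single k' c') =
     Poly_Mapping.single k c * partial_t (Poly_Mapping.single k' c') + Poly_Mapping.single k' c' * partial_t (Poly_Mapping.single k c)"
proof -
  obtain a b where k: "k = (a,b)" by fastforce
  obtain a' b' where k': "k' = (a',b')" by fastforce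
  show ?thesis
    unfolding k k' by (cases a; cases a') (simp_all add: mult_single partial_t_single single_add[symmetric] algebra_simps)
qed

lemma partial_u_mult_single:
  fixes c c' :: "'k::field"
  shows "partial_u (Poly_Mapping.single k c * Poly_Mapping.single k' c') =
     Poly_Mapping.single k c * partial_u (Poly_Mapping.single k' c') + Poly_Mapping.single k' c' * partial_u (Poly_Mapping.single k c)"
proof -
  obtain a b where k: "k = (a,b)" by fastforce
  obtain a' b' where k': "k' = (a',b')" by fastforce
  show ?thesis
    unfolding k k' by (cases b; cases b') (simp_all add: mult_single partial_u_single single_add[symmetric] algebra_simps)
qed

lemma partial_t_mult:
  fixes f g :: "'k::field pol2"
  shows "partial_t (f * g) = f * partial_t g + g * partial_t f"
proof -
  define sf where "sf k = Poly_Mapping.single k (Poly_Mapping.lookup f k)" for k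
  define sg where "sg k = Poly_Mapping.single k (Poly_Mapping.lookup g k)" for k
  let ?A = "Poly_Mapping.keys f" and ?B = "Poly_Mapping.keys g"
  have ef: "f = (\<Sum>k\<in>?A. sf k)" unfolding sf_def by (rule pm_expand)
  have eg: "g = (\<Sum>k\<in>?B. sg k)" unfolding sg_def by (rule pm_expand)
  have "f * g = (\<Sum>k\<in>?A. \<Sum>k'\<in>?B. sf k * sg k')"
    by (subst ef, subst eg) (simp add: sum_product)
  hence "partial_t (f * g) = (\<Sum>k\<in>?A. \<Sum>k'\<in>?B. sf k * partial_t (sg k') + sg k' * partial_t (sf k))"
    by (simp add: partial_t_sum sf_def sg_def partial_t_mult_single)
  also have "\<dots> = (\<Sum>k\<in>?A. sf k * (\<Sum>k'\<in>?B. partial_t (sg k'))) + (\<Sum>k\<in>?A. (\<Sum>k'\<in>?B. sg k') * partial_t (sf k))"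
    by (simp add: sum.distrib sum_distrib_left sum_distrib_right)
  also have "\<dots> = (\<Sum>k\<in>?A. sf k) * partial_t (\<Sum>k'\<in>?B. sg k') + (\<Sum>k'\<in>?B. sg k') * partial_t (\<Sum>k\<in>?A. sf k)"
    by (simp add: partial_t_sum sum_distrib_left sum_distrib_right sum.swap[of _ ?A ?B])
  also have "\<dots> = f * partial_t g + g * partial_t f"
    unfolding ef[symmetric] eg[symmetric] ..
  finally show ?thesis .
qed

lemma partial_u_mult:
  fixes f g :: "'k::field pol2"
  shows "partial_u (f * g) = f * partial_u g + g * partial_u f"
proof -
  define sf where "sf k = Poly_Mapping.single k (Poly_Mapping.lookup f k)" for k
  define sg where "sg k = Poly_Mapping.single k (Poly_Mapping.lookup g k)" for k
  let ?A = "Poly_Mapping.keys f" and ?B = "Poly_Mapping.keys g"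
  have ef: "f = (\<Sum>k\<in>?A. sf k)" unfolding sf_def by (rule pm_expand)
  have eg: "g = (\<Sum>k\<in>?B. sg k)" unfolding sg_def by (rule pm_expand)
  have "f * g = (\<Sum>k\<in>?A. \<Sum>k'\<in>?B. sf k * sg k')"
    by (subst ef, subst eg) (simp add: sum_product)
  hence "partial_u (f * g) = (\<Sum>k\<in>?A. \<Sum>k'\<in>?B. sf k * partial_u (sg k') + sg k' * partial_u (sf k))"
    by (simp add: partial_u_sum sf_def sg_def partial_u_mult_single)
  also have "\<dots> = (\<Sum>k\<in>?A. sf k * (\<Sum>k'\<in>?B. partial_u (sg k'))) + (\<Sum>k\<in>?A. (\<Sum>k'\<in>?B. sg k') * partial_u (sf k))"
    by (simp add: sum.distrib sum_distrib_left sum_distrib_right)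
  also have "\<dots> = (\<Sum>k\<in>?A. sf k) * partial_u (\<Sum>k'\<in>?B. sg k') + (\<Sum>k'\<in>?B. sg k') * partial_u (\<Sum>k\<in>?A. sf k)"
    by (simp add: partial_u_sum sum_distrib_left sum_distrib_right sum.swap[of _ ?A ?B])
  also have "\<dots> = f * partial_u g + g * partial_u f"
    unfolding ef[symmetric] eg[symmetric] ..
  finally show ?thesis .
qed


lemma single_eq_const_X: "Poly_Mapping.single s c = const c * (X s :: 'k::field pol2)"
  by (simp add: const_def mult_single zero_prod_def[symmetric])

lemma const_mult_single: "const c * Poly_Mapping.single s c' = Poly_Mapping.single s (c * c')"
  by (simp add: const_def mult_single zero_prod_def[symmetric])

lemma vf_t_single: "vf_t a b (Poly_Mapping.single s c :: 'k::field pol2) =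
   Poly_Mapping.single (a + (fst s - 1), b + snd s) (of_nat (fst s) * c)"
  by (simp add: vf_t_def mon_def partial_t_single' mult_single)

lemma vf_u_single: "vf_u a b (Poly_Mapping.single s c :: 'k::field pol2) =
   Poly_Mapping.single (a + fst s, b + (snd s - 1)) (of_nat (snd s) * c)"
  by (simp add: vf_u_def mon_def partial_u_single' mult_single)

lemma vf_t_add: "vf_t a b (x + y) = vf_t a b x + vf_t a b y"
  by (simp add: vf_t_def partial_t_add algebra_simps)
lemma vf_u_add: "vf_u a b (x + y) = vf_u a b x + vf_u a b y"
  by (simp add: vf_u_def partial_u_add algebra_simps)
lemma vf_t_mult: "vf_t a b (x * y) = x * vf_t a b y + y * vf_t a b x"
  by (simp add: vf_t_def partial_t_mult algebra_simps)
lemma vf_u_mult: "vf_u a b (x * y) = x * vf_u a b y + y * vf_u a b x"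
  by (simp add: vf_u_def partial_u_mult algebra_simps)
lemma partial_t_const[simp]: "partial_t (const c) = 0"
  by (simp add: const_def partial_t_single)
lemma partial_u_const[simp]: "partial_u (const c) = 0"
  by (simp add: const_def partial_u_single)
lemma vf_t_const: "vf_t a b (const c * x) = const c * vf_t a b x"
  by (simp add: vf_t_def partial_t_mult algebra_simps)
lemma vf_u_const: "vf_u a b (const c * x) = const c * vf_u a b x"
  by (simp add: vf_u_def partial_u_mult algebra_simps)
lemma vf_t_sum: "vf_t a b (\<Sum>k\<in>K. P k) = (\<Sum>k\<in>K. vf_t a b (P k))"
  by (simp add: vf_t_def partial_t_sum sum_distrib_left)
lemma vf_u_sum: "vf_u a b (\<Sum>k\<in>K. P k) = (\<Sum>k\<in>K. vf_u a b (P k))"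
  by (simp add: vf_u_def partial_u_sum sum_distrib_left)

definition GG :: "(nat \<times> nat) set \<Rightarrow> (nat \<times> nat) set \<Rightarrow> ('k::field pol2 \<Rightarrow> 'k pol2) set" where
  "GG Tg Ug = (\<lambda>(a,b). vf_t a b) ` Tg \<union> (\<lambda>(a,b). vf_u a b) ` Ug"

lemma sum_if_eq_fun:
  assumes "finite G" "F \<in> G"
  shows "(\<Sum>g\<in>G. (if P \<and> F = g then h g else 0)) = (if P then h F else (0::'a::comm_monoid_add))"
  using assms by (cases P) (auto simp: sum.delta)

locale absder =
  fixes S :: "(nat \<times> nat) set" and N :: nat and Tg Ug :: "(nat \<times> nat) set"
  assumes S0: "(0,0) \<in> S" and Sadd: "s \<in> S \<Longrightarrow> s' \<in> S \<Longrightarrow> s + s' \<in> S"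
    and SN1: "(N,0) \<in> S" and SN2: "(0,N) \<in> S" and Npos: "N > 0"
    and finTg: "finite Tg" and finUg: "finite Ug"
    and validT: "\<And>a b s. (a,b) \<in> Tg \<Longrightarrow> s \<in> S \<Longrightarrow> fst s > 0 \<Longrightarrow> (a + (fst s - 1), b + snd s) \<in> S"
    and validU: "\<And>a b s. (a,b) \<in> Ug \<Longrightarrow> s \<in> S \<Longrightarrow> snd s > 0 \<Longrightarrow> (a + fst s, b + (snd s - 1)) \<in> S"
    and spanT: "\<And>w. tvalid S w \<Longrightarrow> \<exists>ab\<in>Tg. \<exists>s\<in>S. w = (int (fst ab) - 1 + int (fst s), int (snd ab) + int (snd s))"
    and spanU: "\<And>w. uvalid S w \<Longrightarrow> \<exists>ab\<in>Ug. \<exists>s\<in>S. w = (int (fst ab) + int (fst s), int (snd ab) - 1 + int (snd s))"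
    and full: "\<And>w. inSi S (shift (N,0) w) \<Longrightarrow> inSi S (shift (0,N) w) \<Longrightarrow> tvalid S w \<and> uvalid S w"
    and indepT: "\<And>a b a' b' s. (a,b) \<in> Tg \<Longrightarrow> (a',b') \<in> Tg \<Longrightarrow> s \<in> S \<Longrightarrow> (a' + fst s, b' + snd s) = (a, b) \<Longrightarrow> s = (0,0)"
    and indepU: "\<And>a b a' b' s. (a,b) \<in> Ug \<Longrightarrow> (a',b') \<in> Ug \<Longrightarrow> s \<in> S \<Longrightarrow> (a' + fst s, b' + snd s) = (a, b) \<Longrightarrow> s = (0,0)"
begin

lemma single_in_R: "s \<in> S \<Longrightarrow> Poly_Mapping.single s c \<in> semigroup_ring S"
  by (auto simp: semigroup_ring_def)

lemma zero_in_R: "0 \<in> semigroup_ring S"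
  by (auto simp: semigroup_ring_def)

lemma R_add: "x \<in> semigroup_ring S \<Longrightarrow> y \<in> semigroup_ring S \<Longrightarrow> x + y \<in> semigroup_ring S"
  using keys_add[of x y] by (auto simp: semigroup_ring_def)

lemma R_sum: "(\<And>k. k \<in> K \<Longrightarrow> P k \<in> semigroup_ring S) \<Longrightarrow> (\<Sum>k\<in>K. P k) \<in> semigroup_ring S"
  using keys_sum[of P K] unfolding semigroup_ring_def by blast

lemma vf_t_R:
  assumes ab: "(a,b) \<in> Tg" and x: "x \<in> semigroup_ring S"
  shows "vf_t a b x \<in> (semigroup_ring S :: 'k::field_char_0 pol2 set)"
proof -
  have "vf_t a b x = (\<Sum>s\<in>Poly_Mapping.keys x. vf_t a b (Poly_Mapping.single s (Poly_Mapping.lookup x s)))"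
    by (subst pm_expand[of x]) (simp add: vf_t_sum)
  also have "\<dots> \<in> semigroup_ring S"
  proof (rule R_sum)
    fix s assume s: "s \<in> Poly_Mapping.keys x"
    hence sS: "s \<in> S" using x by (auto simp: semigroup_ring_def)
    show "vf_t a b (Poly_Mapping.single s (Poly_Mapping.lookup x s)) \<in> semigroup_ring S"
    proof (cases "fst s = 0")
      case True thus ?thesis by (simp add: vf_t_single zero_in_R)
    next
      case False thus ?thesis using validT[OF ab sS] by (simp add: vf_t_single single_in_R)
    qed
  qed
  finally show ?thesis .
qed

lemma vf_u_R:
  assumes ab: "(a,b) \<in> Ug" and x: "x \<in> semigroup_ring S"
  shows "vf_u a b x \<in> (semigroup_ring S :: 'k::field_char_0 pol2 set)"
proof -
  have "vf_u a b x = (\<Sum>s\<in>Poly_Mapping.keys x. vf_u a b (Poly_Mapping.single s (Poly_Mapping.lookup x s)))"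
    by (subst pm_expand[of x]) (simp add: vf_u_sum)
  also have "\<dots> \<in> semigroup_ring S"
  proof (rule R_sum)
    fix s assume s: "s \<in> Poly_Mapping.keys x"
    hence sS: "s \<in> S" using x by (auto simp: semigroup_ring_def)
    show "vf_u a b (Poly_Mapping.single s (Poly_Mapping.lookup x s)) \<in> semigroup_ring S"
    proof (cases "snd s = 0")
      case True thus ?thesis by (simp add: vf_u_single zero_in_R)
    next
      case False thus ?thesis using validU[OF ab sS] by (simp add: vf_u_single single_in_R)
    qed
  qed
  finally show ?thesis .
qed

lemma vf_const0: "vf_t a b (const c) = 0" "vf_u a b (const c) = 0"
  by (simp_all add: vf_t_def vf_u_def)

lemma G_Der: "GG Tg Ug \<subseteq> (Der S :: ('k::field_char_0 pol2 \<Rightarrow> 'k pol2) set)"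
  unfolding GG_def Der_def
  by (safe; simp only: vf_t_R vf_u_R vf_t_add vf_u_add vf_t_mult vf_u_mult vf_t_const vf_u_const vf_const0; simp)

lemma G_lin:
  assumes "g \<in> GG Tg Ug"
  shows "g x = (\<Sum>s\<in>Poly_Mapping.keys x. const (Poly_Mapping.lookup x s) * g (X s :: 'k::field pol2))"
proof -
  have e: "x = (\<Sum>s\<in>Poly_Mapping.keys x. const (Poly_Mapping.lookup x s) * X s)"
    by (simp add: const_mult_single pm_expand[of x, symmetric])
  have ge: "g x = g (\<Sum>s\<in>Poly_Mapping.keys x. const (Poly_Mapping.lookup x s) * X s)"
    using arg_cong[OF e, of g] .
  from assms obtain a b where "g = vf_t a b \<or> g = vf_u a b" unfolding GG_def by auto
  thus ?thesis
  proof
    assume g: "g = vf_t a b"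
    show ?thesis unfolding ge unfolding g vf_t_sum vf_t_const ..
  next
    assume g: "g = vf_u a b"
    show ?thesis unfolding ge unfolding g vf_u_sum vf_u_const ..
  qed
qed

end

locale der_in = absder +
  fixes D :: "'k::field_char_0 pol2 \<Rightarrow> 'k pol2"
  assumes DDer: "D \<in> Der S"
begin

lemma DR: "x \<in> semigroup_ring S \<Longrightarrow> D x \<in> semigroup_ring S"
  and Dadd: "x \<in> semigroup_ring S \<Longrightarrow> y \<in> semigroup_ring S \<Longrightarrow> D (x + y) = D x + D y"
  and Dmul: "x \<in> semigroup_ring S \<Longrightarrow> y \<in> semigroup_ring S \<Longrightarrow> D (x * y) = x * D y + y * D x"
  and Dc: "x \<in> semigroup_ring S \<Longrightarrow> D (const c * x) = const c * D x"
  using DDer unfolding Der_def by auto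

lemma D_sum: "finite K \<Longrightarrow> (\<And>k. k \<in> K \<Longrightarrow> P k \<in> semigroup_ring S) \<Longrightarrow> D (\<Sum>k\<in>K. P k) = (\<Sum>k\<in>K. D (P k))"
proof (induction K rule: finite_induct)
  case empty
  have "D (0 + 0) = D 0 + D 0" using Dadd zero_in_R by blast
  thus ?case by simp
next
  case (insert k K)
  have "(\<Sum>k\<in>K. P k) \<in> semigroup_ring S" using insert by (intro R_sum) auto
  thus ?case using insert by (simp add: Dadd)
qed

lemma D_lin: "x \<in> semigroup_ring S \<Longrightarrow> D x = (\<Sum>s\<in>Poly_Mapping.keys x. const (Poly_Mapping.lookup x s) * D (X s))"
proof -
  assume x: "x \<in> semigroup_ring S"
  have e: "x = (\<Sum>s\<in>Poly_Mapping.keys x. const (Poly_Mapping.lookup x s) * X s)"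
    by (simp add: const_mult_single pm_expand[of x, symmetric])
  have kS: "s \<in> Poly_Mapping.keys x \<Longrightarrow> s \<in> S" for s using x by (auto simp: semigroup_ring_def)
  have "D x = D (\<Sum>s\<in>Poly_Mapping.keys x. const (Poly_Mapping.lookup x s) * X s)"
    using arg_cong[OF e, of D] .
  also have "\<dots> = (\<Sum>s\<in>Poly_Mapping.keys x. D (const (Poly_Mapping.lookup x s) * X s))"
    by (rule D_sum) (auto simp: const_mult_single intro!: single_in_R kS)
  also have "\<dots> = (\<Sum>s\<in>Poly_Mapping.keys x. const (Poly_Mapping.lookup x s) * D (X s))"
    by (rule sum.cong) (auto simp: Dc single_in_R kS)
  finally show ?thesis .
qed

definition dl :: "int \<times> int \<Rightarrow> nat \<times> nat \<Rightarrow> 'k" where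
  "dl w s = (if nonneg (shift s w) then Poly_Mapping.lookup (D (X s)) (nn (shift s w)) else 0)"

lemma dl_add:
  assumes s: "s \<in> S" and s': "s' \<in> S"
  shows "dl w (s + s') = dl w s + dl w s'"
proof -
  have XX: "X (s + s') = X s * (X s' :: 'k pol2)" by (simp add: mult_single)
  have DX: "D (X (s + s')) = X s * D (X s') + X s' * D (X s)"
    unfolding XX by (rule Dmul) (auto intro: single_in_R s s')
  show ?thesis
  proof (cases "nonneg (shift (s + s') w)")
    case False
    hence "\<not> nonneg (shift s w)" "\<not> nonneg (shift s' w)"
      by (auto simp: nonneg_def shift_def)
    thus ?thesis using False by (simp add: dl_def)
  next
    case True
    have l1: "Poly_Mapping.lookup (X s * D (X s')) (nn (shift (s + s') w)) = dl w s'"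
      using True by (auto simp: lookup_single_mult dl_def nonneg_def shift_def nn_def nat_add_distrib
          intro!: arg_cong[where f = "Poly_Mapping.lookup (D (X s'))"])
    have l2: "Poly_Mapping.lookup (X s' * D (X s)) (nn (shift (s + s') w)) = dl w s"
      using True by (auto simp: lookup_single_mult dl_def nonneg_def shift_def nn_def nat_add_distrib
          intro!: arg_cong[where f = "Poly_Mapping.lookup (D (X s))"])
    show ?thesis using True l1 l2 by (simp add: dl_def DX lookup_add)
  qed
qed

lemma dl_zero: "dl w (0,0) = 0"
  using dl_add[OF S0 S0, of w] by simp

lemma smul_S: "s \<in> S \<Longrightarrow> (m * fst s, m * snd s) \<in> S"
proof (induction m)
  case 0 thus ?case using S0 by simp
next
  case (Suc m)
  have "(Suc m * fst s, Suc m * snd s) = (m * fst s, m * snd s) + s" by (simp add: prod_eq_iff)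
  thus ?case using Suc Sadd by metis
qed

lemma dl_smul: "s \<in> S \<Longrightarrow> dl w (m * fst s, m * snd s) = of_nat m * dl w s"
proof (induction m)
  case 0 thus ?case using dl_zero by simp
next
  case (Suc m)
  have "(Suc m * fst s, Suc m * snd s) = (m * fst s, m * snd s) + s" by (simp add: prod_eq_iff)
  hence "dl w (Suc m * fst s, Suc m * snd s) = dl w (m * fst s, m * snd s) + dl w s"
    using dl_add[OF smul_S[OF Suc.prems] Suc.prems] by simp
  thus ?case using Suc by (simp add: algebra_simps)
qed

lemma dl_formula:
  assumes s: "s \<in> S"
  shows "of_nat N * dl w s = of_nat (fst s) * dl w (N,0::nat) + of_nat (snd s) * dl w (0::nat,N)"
proof -
  have "dl w (N * fst s, N * snd s) = dl w ((fst s * fst (N,0::nat), fst s * snd (N,0::nat)) + (snd s * fst (0::nat,N), snd s * snd (0::nat,N)))"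
    by (rule arg_cong[where f="dl w"]) (simp add: prod_eq_iff)
  also have "dl w ((fst s * fst (N,0::nat), fst s * snd (N,0::nat)) + (snd s * fst (0::nat,N), snd s * snd (0::nat,N))) = dl w (fst s * fst (N,0::nat), fst s * snd (N,0::nat)) + dl w (snd s * fst (0::nat,N), snd s * snd (0::nat,N))"
    by (rule dl_add) (rule smul_S[OF SN1], rule smul_S[OF SN2])
  finally have "dl w (N * fst s, N * snd s) = dl w (fst s * fst (N,0::nat), fst s * snd (N,0::nat)) + dl w (snd s * fst (0::nat,N), snd s * snd (0::nat,N))" .
  thus ?thesis using dl_smul[OF s, where m=N and w=w] dl_smul[OF SN1, where m="fst s" and w=w] dl_smul[OF SN2, where m="snd s" and w=w] by simp
qed

definition W :: "(int \<times> int) set" where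
  "W = (\<lambda>v. (int (fst v) - int N, int (snd v))) ` Poly_Mapping.keys (D (X (N,0)))
     \<union> (\<lambda>v. (int (fst v), int (snd v) - int N)) ` Poly_Mapping.keys (D (X (0,N)))"

lemma finW: "finite W" by (simp add: W_def)

lemma notW: assumes "w \<notin> W" shows "dl w (N,0) = 0" "dl w (0,N) = 0"
proof -
  show "dl w (N,0) = 0"
  proof (rule ccontr)
    assume a: "dl w (N,0) \<noteq> 0"
    hence nn0: "nonneg (shift (N,0) w)" and k: "nn (shift (N,0) w) \<in> Poly_Mapping.keys (D (X (N,0)))"
      by (auto simp: dl_def in_keys_iff split: if_splits)
    have "w = (\<lambda>v. (int (fst v) - int N, int (snd v))) (nn (shift (N,0) w))"
      using nn0 by (auto simp: nn_def shift_def nonneg_def prod_eq_iff)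
    thus False using k assms by (auto simp: W_def)
  qed
  show "dl w (0,N) = 0"
  proof (rule ccontr)
    assume a: "dl w (0,N) \<noteq> 0"
    hence nn0: "nonneg (shift (0,N) w)" and k: "nn (shift (0,N) w) \<in> Poly_Mapping.keys (D (X (0,N)))"
      by (auto simp: dl_def in_keys_iff split: if_splits)
    have "w = (\<lambda>v. (int (fst v), int (snd v) - int N)) (nn (shift (0,N) w))"
      using nn0 by (auto simp: nn_def shift_def nonneg_def prod_eq_iff)
    thus False using k assms by (auto simp: W_def)
  qed
qed

lemma Nnz: "(of_nat N :: 'k) \<noteq> 0" using Npos by simp

lemma dl_notW: "s \<in> S \<Longrightarrow> w \<notin> W \<Longrightarrow> dl w s = 0"
  using dl_formula[of s w] notW[of w] Nnz by simp

lemma D_X: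
  assumes s: "s \<in> S"
  shows "D (X s) = (\<Sum>w\<in>W. Poly_Mapping.single (nn (shift s w)) (dl w s))"
proof (rule poly_mapping_eqI)
  fix v :: "nat \<times> nat"
  define w0 where "w0 = (int (fst v) - int (fst s), int (snd v) - int (snd s))"
  have sh0: "shift s w0 = (int (fst v), int (snd v))" by (simp add: w0_def shift_def)
  have dl0: "dl w0 s = Poly_Mapping.lookup (D (X s)) v"
    by (simp add: dl_def sh0 nonneg_def nn_def)
  have terms: "\<And>w. (Poly_Mapping.lookup (Poly_Mapping.single (nn (shift s w)) (dl w s)) v) = (if w = w0 then dl w s else 0)"
  proof -
    fix w
    show "Poly_Mapping.lookup (Poly_Mapping.single (nn (shift s w)) (dl w s)) v = (if w = w0 then dl w s else 0)"
    proof (cases "dl w s = 0")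
      case True thus ?thesis by auto
    next
      case False
      hence nw: "nonneg (shift s w)" by (auto simp: dl_def split: if_splits)
      have "nn (shift s w) = v \<longleftrightarrow> w = w0"
        using nw by (auto simp: nn_def shift_def nonneg_def w0_def prod_eq_iff)
      thus ?thesis by (auto simp: lookup_single when_def)
    qed
  qed
  have "Poly_Mapping.lookup (\<Sum>w\<in>W. Poly_Mapping.single (nn (shift s w)) (dl w s)) v = (\<Sum>w\<in>W. if w = w0 then dl w s else 0)"
    by (simp add: lookup_sum terms)
  also have "\<dots> = (if w0 \<in> W then dl w0 s else 0)" using finW by (simp add: sum.delta')
  also have "\<dots> = dl w0 s" using dl_notW[OF s] by auto
  finally show "Poly_Mapping.lookup (D (X s)) v = Poly_Mapping.lookup (\<Sum>w\<in>W. Poly_Mapping.single (nn (shift s w)) (dl w s)) v"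
    using dl0 by simp
qed

definition al :: "int \<times> int \<Rightarrow> 'k" where "al w = dl w (N,0) / of_nat N"
definition be :: "int \<times> int \<Rightarrow> 'k" where "be w = dl w (0,N) / of_nat N"

lemma dl_ab: "s \<in> S \<Longrightarrow> dl w s = of_nat (fst s) * al w + of_nat (snd s) * be w"
  using dl_formula[of s w] Nnz by (simp add: al_def be_def field_simps)

lemma dl_valid: "s \<in> S \<Longrightarrow> dl w s \<noteq> 0 \<Longrightarrow> inSi S (shift s w)"
proof -
  assume s: "s \<in> S" and d: "dl w s \<noteq> 0"
  hence nw: "nonneg (shift s w)" and k: "nn (shift s w) \<in> Poly_Mapping.keys (D (X s))"
    by (auto simp: dl_def in_keys_iff split: if_splits)
  have "D (X s) \<in> semigroup_ring S" by (rule DR) (rule single_in_R[OF s])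
  thus ?thesis using nw k by (auto simp: inSi_def semigroup_ring_def)
qed

lemma al_tvalid: assumes "al w \<noteq> 0" shows "tvalid S w"
proof (cases "be w = 0")
  case True
  show ?thesis unfolding tvalid_def
  proof (intro ballI impI)
    fix s assume s: "s \<in> S" "0 < fst s"
    have "dl w s \<noteq> 0" using dl_ab[OF s(1), of w] True assms s(2) by simp
    thus "inSi S (shift s w)" using dl_valid s by blast
  qed
next
  case False
  have "dl w (N,0) \<noteq> 0" using dl_ab[OF SN1, of w] assms Npos by simp
  moreover have "dl w (0,N) \<noteq> 0" using dl_ab[OF SN2, of w] False Npos by simp
  ultimately show ?thesis using full dl_valid SN1 SN2 by blast
qed

lemma be_uvalid: assumes "be w \<noteq> 0" shows "uvalid S w"
proof (cases "al w = 0")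
  case True
  show ?thesis unfolding uvalid_def
  proof (intro ballI impI)
    fix s assume s: "s \<in> S" "0 < snd s"
    have "dl w s \<noteq> 0" using dl_ab[OF s(1), of w] True assms s(2) by simp
    thus "inSi S (shift s w)" using dl_valid s by blast
  qed
next
  case False
  have "dl w (N,0) \<noteq> 0" using dl_ab[OF SN1, of w] False Npos by simp
  moreover have "dl w (0,N) \<noteq> 0" using dl_ab[OF SN2, of w] assms Npos by simp
  ultimately show ?thesis using full dl_valid SN1 SN2 by blast
qed

lemma keyT:
  assumes w: "w = (int a - 1 + int (fst st), int b + int (snd st))"
  shows "Poly_Mapping.single st c * vf_t a b (X s) = Poly_Mapping.single (nn (shift s w)) (c * of_nat (fst s))"
proof (cases "fst s = 0")
  case True thus ?thesis by (simp add: vf_t_single mult_single)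
next
  case False
  have "st + (a + (fst s - 1), b + snd s) = nn (shift s w)"
    using False by (auto simp: w nn_def shift_def prod_eq_iff)
  thus ?thesis by (simp add: vf_t_single mult_single)
qed

lemma keyU:
  assumes w: "w = (int a + int (fst st), int b - 1 + int (snd st))"
  shows "Poly_Mapping.single st c * vf_u a b (X s) = Poly_Mapping.single (nn (shift s w)) (c * of_nat (snd s))"
proof (cases "snd s = 0")
  case True thus ?thesis by (simp add: vf_u_single mult_single)
next
  case False
  have "st + (a + fst s, b + (snd s - 1)) = nn (shift s w)"
    using False by (auto simp: w nn_def shift_def prod_eq_iff)
  thus ?thesis by (simp add: vf_u_single mult_single)
qed

lemma gen_exists:
  "\<exists>r. (\<forall>g\<in>GG Tg Ug. r g \<in> semigroup_ring S) \<and>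
       (\<forall>x\<in>semigroup_ring S. D x = (\<Sum>g\<in>GG Tg Ug. r g * g x))"
proof -
  have "\<forall>w. \<exists>p. al w \<noteq> 0 \<longrightarrow> fst p \<in> Tg \<and> snd p \<in> S \<and>
      w = (int (fst (fst p)) - 1 + int (fst (snd p)), int (snd (fst p)) + int (snd (snd p)))"
  proof (intro allI)
    fix w
    show "\<exists>p. al w \<noteq> 0 \<longrightarrow> fst p \<in> Tg \<and> snd p \<in> S \<and>
      w = (int (fst (fst p)) - 1 + int (fst (snd p)), int (snd (fst p)) + int (snd (snd p)))"
    proof (cases "al w = 0")
      case True thus ?thesis by simp
    next
      case False
      then obtain ab s where "ab \<in> Tg" "s \<in> S" "w = (int (fst ab) - 1 + int (fst s), int (snd ab) + int (snd s))" using spanT al_tvalid by blast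
      thus ?thesis by (intro exI[of _ "(ab, s)"]) simp
    qed
  qed
  then obtain PT where hT: "\<And>w. al w \<noteq> 0 \<Longrightarrow> fst (PT w) \<in> Tg \<and> snd (PT w) \<in> S \<and>
      w = (int (fst (fst (PT w))) - 1 + int (fst (snd (PT w))), int (snd (fst (PT w))) + int (snd (snd (PT w))))"
    by metis
  have "\<forall>w. \<exists>p. be w \<noteq> 0 \<longrightarrow> fst p \<in> Ug \<and> snd p \<in> S \<and>
      w = (int (fst (fst p)) + int (fst (snd p)), int (snd (fst p)) - 1 + int (snd (snd p)))"
  proof (intro allI)
    fix w
    show "\<exists>p. be w \<noteq> 0 \<longrightarrow> fst p \<in> Ug \<and> snd p \<in> S \<and>
      w = (int (fst (fst p)) + int (fst (snd p)), int (snd (fst p)) - 1 + int (snd (snd p)))"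
    proof (cases "be w = 0")
      case True thus ?thesis by simp
    next
      case False
      then obtain ab s where "ab \<in> Ug" "s \<in> S" "w = (int (fst ab) + int (fst s), int (snd ab) - 1 + int (snd s))" using spanU be_uvalid by blast
      thus ?thesis by (intro exI[of _ "(ab, s)"]) simp
    qed
  qed
  then obtain PU where hU: "\<And>w. be w \<noteq> 0 \<Longrightarrow> fst (PU w) \<in> Ug \<and> snd (PU w) \<in> S \<and>
      w = (int (fst (fst (PU w))) + int (fst (snd (PU w))), int (snd (fst (PU w))) - 1 + int (snd (snd (PU w))))"
    by metis
  define G where "G = (GG Tg Ug :: ('k pol2 \<Rightarrow> 'k pol2) set)"
  define FT where "FT w = (vf_t :: _ \<Rightarrow> _ \<Rightarrow> 'k pol2 \<Rightarrow> 'k pol2) (fst (fst (PT w))) (snd (fst (PT w)))" for w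
  define FU where "FU w = (vf_u :: _ \<Rightarrow> _ \<Rightarrow> 'k pol2 \<Rightarrow> 'k pol2) (fst (fst (PU w))) (snd (fst (PU w)))" for w
  define A where "A w (g :: 'k pol2 \<Rightarrow> 'k pol2) = (if al w \<noteq> 0 \<and> FT w = g then Poly_Mapping.single (snd (PT w)) (al w) else 0)" for w g
  define B where "B w (g :: 'k pol2 \<Rightarrow> 'k pol2) = (if be w \<noteq> 0 \<and> FU w = g then Poly_Mapping.single (snd (PU w)) (be w) else 0)" for w g
  define r where "r (g :: 'k pol2 \<Rightarrow> 'k pol2) = (\<Sum>w\<in>W. A w g + B w g)" for g
  have finG: "finite G" unfolding G_def GG_def using finTg finUg by simp
  have FTG: "al w \<noteq> 0 \<Longrightarrow> FT w \<in> G" for w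
    using hT[of w] unfolding G_def GG_def FT_def by (auto simp: case_prod_unfold intro!: image_eqI[where x="fst (PT w)"])
  have FUG: "be w \<noteq> 0 \<Longrightarrow> FU w \<in> G" for w
    using hU[of w] unfolding G_def GG_def FU_def by (auto simp: case_prod_unfold intro!: image_eqI[where x="fst (PU w)"])
  have rR: "r g \<in> semigroup_ring S" for g
    unfolding r_def A_def B_def
    by (intro R_sum R_add) (auto intro: single_in_R zero_in_R dest: hT hU)
  have sumA: "(\<Sum>g\<in>G. A w g * g (X s)) = Poly_Mapping.single (nn (shift s w)) (al w * of_nat (fst s))" for w s
  proof (cases "al w = 0")
    case True thus ?thesis by (simp add: A_def)
  next
    case False
    have "(\<Sum>g\<in>G. A w g * g (X s)) = (\<Sum>g\<in>G. if al w \<noteq> 0 \<and> FT w = g then Poly_Mapping.single (snd (PT w)) (al w) * g (X s) else 0)"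
      by (rule sum.cong) (auto simp: A_def)
    also have "\<dots> = Poly_Mapping.single (snd (PT w)) (al w) * FT w (X s)"
      using FTG[OF False] finG False by (simp add: sum.delta')
    also have "\<dots> = Poly_Mapping.single (nn (shift s w)) (al w * of_nat (fst s))"
      unfolding FT_def by (rule keyT) (use hT[OF False] in auto)
    finally show ?thesis .
  qed
  have sumB: "(\<Sum>g\<in>G. B w g * g (X s)) = Poly_Mapping.single (nn (shift s w)) (be w * of_nat (snd s))" for w s
  proof (cases "be w = 0")
    case True thus ?thesis by (simp add: B_def)
  next
    case False
    have "(\<Sum>g\<in>G. B w g * g (X s)) = (\<Sum>g\<in>G. if be w \<noteq> 0 \<and> FU w = g then Poly_Mapping.single (snd (PU w)) (be w) * g (X s) else 0)"
      by (rule sum.cong) (auto simp: B_def)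
    also have "\<dots> = Poly_Mapping.single (snd (PU w)) (be w) * FU w (X s)"
      using FUG[OF False] finG False by (simp add: sum.delta')
    also have "\<dots> = Poly_Mapping.single (nn (shift s w)) (be w * of_nat (snd s))"
      unfolding FU_def by (rule keyU) (use hU[OF False] in auto)
    finally show ?thesis .
  qed
  have onX: "(\<Sum>g\<in>G. r g * g (X s)) = D (X s)" if s: "s \<in> S" for s
  proof -
    have "(\<Sum>g\<in>G. r g * g (X s)) = (\<Sum>g\<in>G. \<Sum>w\<in>W. A w g * g (X s) + B w g * g (X s))"
      unfolding r_def by (simp add: sum_distrib_right distrib_right)
    also have "\<dots> = (\<Sum>w\<in>W. (\<Sum>g\<in>G. A w g * g (X s)) + (\<Sum>g\<in>G. B w g * g (X s)))"
      by (subst sum.swap) (simp add: sum.distrib)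
    also have "\<dots> = (\<Sum>w\<in>W. Poly_Mapping.single (nn (shift s w)) (dl w s))"
      by (rule sum.cong) (auto simp: sumA sumB single_add[symmetric] dl_ab[OF s] mult.commute)
    also have "\<dots> = D (X s)" using D_X[OF s] by simp
    finally show ?thesis .
  qed
  have "\<forall>x\<in>semigroup_ring S. D x = (\<Sum>g\<in>G. r g * g x)"
  proof
    fix x :: "'k pol2" assume x: "x \<in> semigroup_ring S"
    have kS: "s \<in> Poly_Mapping.keys x \<Longrightarrow> s \<in> S" for s using x by (auto simp: semigroup_ring_def)
    have "(\<Sum>g\<in>G. r g * g x) = (\<Sum>g\<in>G. r g * (\<Sum>s\<in>Poly_Mapping.keys x. const (Poly_Mapping.lookup x s) * g (X s)))"
      by (rule sum.cong) (auto simp: G_def dest: G_lin[where x=x])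
    also have "\<dots> = (\<Sum>s\<in>Poly_Mapping.keys x. const (Poly_Mapping.lookup x s) * (\<Sum>g\<in>G. r g * g (X s)))"
      by (simp add: sum_distrib_left sum.swap[of _ G] algebra_simps)
    also have "\<dots> = (\<Sum>s\<in>Poly_Mapping.keys x. const (Poly_Mapping.lookup x s) * D (X s))"
      by (rule sum.cong) (auto simp: onX kS)
    also have "\<dots> = D x" using D_lin[OF x] by simp
    finally show "D x = (\<Sum>g\<in>G. r g * g x)" by simp
  qed
  thus ?thesis using rR unfolding G_def by blast
qed

end

context absder begin

lemma gen: "generates_Der S (GG Tg Ug :: ('k::field_char_0 pol2 \<Rightarrow> 'k pol2) set)"
  unfolding generates_Der_def
proof
  fix D :: "'k pol2 \<Rightarrow> 'k pol2" assume D: "D \<in> Der S"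
  interpret der_in S N Tg Ug D
    by (intro der_in.intro der_in_axioms.intro absder_axioms D)
  show "\<exists>r. (\<forall>g\<in>GG Tg Ug. r g \<in> semigroup_ring S) \<and> (\<forall>x\<in>semigroup_ring S. D x = (\<Sum>g\<in>GG Tg Ug. r g * g x))"
    by (rule gen_exists)
qed

lemma notgen_t:
  assumes ab: "(a,b) \<in> Tg" and H: "H \<subseteq> (GG Tg Ug :: ('k::field_char_0 pol2 \<Rightarrow> 'k pol2) set)"
    and nH: "vf_t a b \<notin> H"
    and rR: "\<forall>h\<in>H. r h \<in> semigroup_ring S"
    and eq: "\<forall>x\<in>semigroup_ring S. vf_t a b x = (\<Sum>h\<in>H. r h * h x)"
  shows False
proof -
  let ?x = "X (N,0) :: 'k pol2"
  let ?v = "(a + (N - 1), b)"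
  have xR: "?x \<in> semigroup_ring S" by (rule single_in_R[OF SN1])
  have L: "Poly_Mapping.lookup (vf_t a b ?x) ?v = of_nat N" by (simp add: vf_t_single)
  have R0: "Poly_Mapping.lookup (r h * h ?x) ?v = 0" if h: "h \<in> H" for h
  proof -
    from h H have hG: "h \<in> GG Tg Ug" by blast
    then obtain a' b' where "((a',b') \<in> Tg \<and> h = vf_t a' b') \<or> ((a',b') \<in> Ug \<and> h = vf_u a' b')"
      unfolding GG_def by auto
    thus ?thesis
    proof
      assume "(a',b') \<in> Ug \<and> h = vf_u a' b'"
      thus ?thesis by (simp add: vf_u_single)
    next
      assume hh: "(a',b') \<in> Tg \<and> h = vf_t a' b'"
      have hx: "h ?x = Poly_Mapping.single (a' + (N - 1), b') (of_nat N)" using hh by (simp add: vf_t_single)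
      show ?thesis
      proof (rule ccontr)
        assume nz: "Poly_Mapping.lookup (r h * h ?x) ?v \<noteq> 0"
        hence le: "a' + (N - 1) \<le> a + (N - 1)" "b' \<le> b"
          and k: "Poly_Mapping.lookup (r h) (a + (N - 1) - (a' + (N - 1)), b - b') \<noteq> 0"
          unfolding hx mult.commute[of "r h"] lookup_single_mult by (auto split: if_splits)
        have "(a - a', b - b') \<in> Poly_Mapping.keys (r h)" using k le by (simp add: in_keys_iff)
        hence "(a - a', b - b') \<in> S" using rR h by (auto simp: semigroup_ring_def)
        moreover have "(a' + fst (a - a', b - b'), b' + snd (a - a', b - b')) = (a, b)" using le by simp
        ultimately have "(a - a', b - b') = (0,0)" using indepT[OF ab] hh by blast
        hence "a' = a" "b' = b" using le by auto
        thus False using hh h nH by simp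
      qed
    qed
  qed
  have "Poly_Mapping.lookup (vf_t a b ?x) ?v = (\<Sum>h\<in>H. Poly_Mapping.lookup (r h * h ?x) ?v)"
    using eq xR by (simp add: lookup_sum)
  also have "\<dots> = 0" using R0 by simp
  finally show False using L Npos by simp
qed

lemma notgen_u:
  assumes ab: "(a,b) \<in> Ug" and H: "H \<subseteq> (GG Tg Ug :: ('k::field_char_0 pol2 \<Rightarrow> 'k pol2) set)"
    and nH: "vf_u a b \<notin> H"
    and rR: "\<forall>h\<in>H. r h \<in> semigroup_ring S"
    and eq: "\<forall>x\<in>semigroup_ring S. vf_u a b x = (\<Sum>h\<in>H. r h * h x)"
  shows False
proof -
  let ?x = "X (0,N) :: 'k pol2"
  let ?v = "(a, b + (N - 1))"
  have xR: "?x \<in> semigroup_ring S" by (rule single_in_R[OF SN2])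
  have L: "Poly_Mapping.lookup (vf_u a b ?x) ?v = of_nat N" by (simp add: vf_u_single)
  have R0: "Poly_Mapping.lookup (r h * h ?x) ?v = 0" if h: "h \<in> H" for h
  proof -
    from h H have hG: "h \<in> GG Tg Ug" by blast
    then obtain a' b' where "((a',b') \<in> Tg \<and> h = vf_t a' b') \<or> ((a',b') \<in> Ug \<and> h = vf_u a' b')"
      unfolding GG_def by auto
    thus ?thesis
    proof
      assume "(a',b') \<in> Tg \<and> h = vf_t a' b'"
      thus ?thesis by (simp add: vf_t_single)
    next
      assume hh: "(a',b') \<in> Ug \<and> h = vf_u a' b'"
      have hx: "h ?x = Poly_Mapping.single (a', b' + (N - 1)) (of_nat N)" using hh by (simp add: vf_u_single)
      show ?thesis
      proof (rule ccontr)
        assume nz: "Poly_Mapping.lookup (r h * h ?x) ?v \<noteq> 0"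
        hence le: "a' \<le> a" "b' + (N - 1) \<le> b + (N - 1)"
          and k: "Poly_Mapping.lookup (r h) (a - a', b + (N - 1) - (b' + (N - 1))) \<noteq> 0"
          unfolding hx mult.commute[of "r h"] lookup_single_mult by (auto split: if_splits)
        have "(a - a', b - b') \<in> Poly_Mapping.keys (r h)" using k le by (simp add: in_keys_iff)
        hence "(a - a', b - b') \<in> S" using rR h by (auto simp: semigroup_ring_def)
        moreover have "(a' + fst (a - a', b - b'), b' + snd (a - a', b - b')) = (a, b)" using le by simp
        ultimately have "(a - a', b - b') = (0,0)" using indepU[OF ab] hh by blast
        hence "a' = a" "b' = b" using le by auto
        thus False using hh h nH by simp
      qed
    qed
  qed
  have "Poly_Mapping.lookup (vf_u a b ?x) ?v = (\<Sum>h\<in>H. Poly_Mapping.lookup (r h * h ?x) ?v)"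
    using eq xR by (simp add: lookup_sum)
  also have "\<dots> = 0" using R0 by simp
  finally show False using L Npos by simp
qed

theorem abs_main: "minimally_generates_Der S (GG Tg Ug :: ('k::field_char_0 pol2 \<Rightarrow> 'k pol2) set)"
  unfolding minimally_generates_Der_def
proof (intro conjI allI impI)
  show "finite (GG Tg Ug :: ('k pol2 \<Rightarrow> 'k pol2) set)" unfolding GG_def using finTg finUg by simp
  show "GG Tg Ug \<subseteq> (Der S :: ('k pol2 \<Rightarrow> 'k pol2) set)" by (rule G_Der)
  show "generates_Der S (GG Tg Ug :: ('k pol2 \<Rightarrow> 'k pol2) set)" by (rule gen)
  fix H :: "('k pol2 \<Rightarrow> 'k pol2) set"
  assume HG: "H \<subset> GG Tg Ug"
  show "\<not> generates_Der S H"
  proof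
    assume gH: "generates_Der S H"
    from HG obtain g where g: "g \<in> GG Tg Ug" "g \<notin> H" by blast
    have gD: "g \<in> Der S" using g G_Der by blast
    then obtain r where rR: "\<forall>h\<in>H. r h \<in> semigroup_ring S" and eq: "\<forall>x\<in>semigroup_ring S. g x = (\<Sum>h\<in>H. r h * h x)"
      using gH unfolding generates_Der_def by blast
    from g(1) obtain a b where "((a,b) \<in> Tg \<and> g = vf_t a b) \<or> ((a,b) \<in> Ug \<and> g = vf_u a b)"
      unfolding GG_def by auto
    thus False
    proof
      assume "(a,b) \<in> Tg \<and> g = vf_t a b"
      thus False using notgen_t[of a b H r] HG rR eq g(2) by auto
    next
      assume "(a,b) \<in> Ug \<and> g = vf_u a b"
      thus False using notgen_u[of a b H r] HG rR eq g(2) by auto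
    qed
  qed
qed

end

locale arith =
  fixes n0 d p :: nat
  assumes p2: "p \<ge> 2" and d0: "d > 0" and np: "n0 > p" and cop: "coprime n0 d"
begin

definition N where "N = n0 + p*d"
definition inS :: "nat \<Rightarrow> nat \<Rightarrow> bool" where
  "inS x y \<longleftrightarrow> (\<exists>k i l. i \<le> k \<and> l \<le> i*p \<and> x = i*n0 + l*d \<and> x + y = k*N)"

lemma rep_half:
  assumes eq: "i*n0 + l*d = i'*n0 + l'*d" and le: "i' \<le> i"
  shows "\<exists>t. i = i' + t*d \<and> l' = l + t*n0"
proof -
  obtain j where j: "i = i' + j" using le le_Suc_ex by blast
  have e2: "j*n0 + l*d = l'*d" using eq unfolding j by (simp add: algebra_simps)
  hence "l*d \<le> l'*d" by linarith
  hence "l \<le> l'" using d0 by simp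
  then obtain e where e: "l' = l + e" using le_Suc_ex by blast
  have e3: "j*n0 = e*d" using e2 unfolding e by (simp add: algebra_simps)
  have "d dvd j*n0" using e3 by simp
  hence "d dvd j" using cop by (metis coprime_commute coprime_dvd_mult_left_iff)
  then obtain t where "j = d*t" by (rule dvdE)
  hence t: "j = t*d" by simp
  have "t*n0*d = e*d" using e3 t by (simp add: algebra_simps)
  hence "e = t*n0" using d0 by simp
  thus ?thesis using t j e by (intro exI[of _ t]) auto
qed

lemma rep:
  assumes eq: "i*n0 + l*d = i'*n0 + l'*d"
  shows "(\<exists>t. i = i' + t*d \<and> l' = l + t*n0) \<or> (\<exists>t. i' = i + t*d \<and> l = l' + t*n0)"
proof (cases "i' \<le> i")
  case True thus ?thesis using rep_half[OF eq] by blast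
next
  case False thus ?thesis using rep_half[OF eq[symmetric]] by auto
qed

lemma Npos: "N > 0" using np by (simp add: N_def)

lemma inS_add:
  assumes A: "inS x y" and B: "inS x' y'" shows "inS (x + x') (y + y')"
proof -
  from A obtain k i l where h: "i \<le> k" "l \<le> i*p" "x = i*n0 + l*d" "x + y = k*N" unfolding inS_def by blast
  from B obtain k' i' l' where h': "i' \<le> k'" "l' \<le> i'*p" "x' = i'*n0 + l'*d" "x' + y' = k'*N" unfolding inS_def by blast
  have "i + i' \<le> k + k'" "l + l' \<le> (i + i') * p" "x + x' = (i + i') * n0 + (l + l') * d"
    "x + x' + (y + y') = (k + k') * N"
    using h h' by (simp_all add: add_mult_distrib)
  thus ?thesis unfolding inS_def by blast
qed

lemma inS_gen: "m \<le> p \<Longrightarrow> inS (n0 + m*d) (N - (n0 + m*d))"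
  unfolding inS_def N_def
  by (intro exI[of _ 1] exI[of _ 1] exI[of _ m]) auto

lemma inS_0N: "inS 0 N"
  unfolding inS_def by (intro exI[of _ 1] exI[of _ 0] exI[of _ 0]) auto

lemma inS_00: "inS 0 0"
  unfolding inS_def by (intro exI[of _ 0] exI[of _ 0] exI[of _ 0]) auto

lemma inS_N0: "inS N 0"
  using inS_gen[of p] by (simp add: N_def)

lemma decT:
  assumes "inS x y" "x > 0"
  shows "\<exists>m\<le>p. \<exists>x' y'. x = (n0 + m*d) + x' \<and> y = (N - (n0 + m*d)) + y' \<and> inS x' y'"
proof -
  from assms obtain k i l where h: "i \<le> k" "l \<le> i*p" "x = i*n0 + l*d" "x + y = k*N" unfolding inS_def by blast
  have "i \<noteq> 0" using h(2,3) assms(2) by (cases "i = 0") auto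
  then obtain i1 where i1: "i = Suc i1" using not0_implies_Suc by blast
  have "k \<noteq> 0" using h(1) i1 by simp
  then obtain k1 where k1: "k = Suc k1" using not0_implies_Suc by blast
  define m where "m = min l p"
  have mp: "m \<le> p" by (simp add: m_def)
  have "m \<le> l" by (simp add: m_def)
  define l1 where "l1 = l - m"
  have l1: "l = m + l1" using \<open>m \<le> l\<close> by (simp add: l1_def)
  have lm: "l1 \<le> i1*p"
  proof (cases "l \<le> p")
    case True hence "m = l" by (simp add: m_def)
    thus ?thesis using l1 by simp
  next
    case False
    hence "m = p" by (simp add: m_def)
    thus ?thesis using h(2) i1 l1 by simp
  qed
  have x: "x = (n0 + m*d) + (i1*n0 + l1*d)" using h(3) i1 l1 by (simp add: algebra_simps)
  have le1: "n0 + m*d + (N - (n0 + m*d)) = N" using mp by (simp add: N_def)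
  have "l1*d \<le> i1*p*d" using lm by simp
  moreover have "i1*N = i1*n0 + i1*p*d" by (simp add: N_def algebra_simps)
  ultimately have b1: "i1*n0 + l1*d \<le> i1*N" by linarith
  have b2: "i1*N \<le> k1*N" using h(1) i1 k1 by simp
  have tot: "x + y = N + k1*N" using h(4) k1 by simp
  define y' where "y' = k1*N - (i1*n0 + l1*d)"
  have y: "y = (N - (n0 + m*d)) + y'" using tot x le1 b1 b2 unfolding y'_def by linarith
  have c1: "i1 \<le> k1" using h(1) i1 k1 by simp
  have c2: "i1 * n0 + l1 * d + y' = k1 * N" using b1 b2 unfolding y'_def by linarith
  have "inS (i1*n0 + l1*d) y'"
    unfolding inS_def
    by (rule exI[of _ k1], rule exI[of _ i1], rule exI[of _ l1]) (simp add: c1 c2 lm)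
  thus ?thesis using x y mp by blast
qed

lemma decU:
  assumes "inS x y" "y > 0"
  shows "(\<exists>y'. y = N + y' \<and> inS x y') \<or>
    (\<exists>m<p. \<exists>x' y'. x = (n0 + m*d) + x' \<and> y = (N - (n0 + m*d)) + y' \<and> inS x' y')"
proof -
  from assms obtain k i l where h: "i \<le> k" "l \<le> i*p" "x = i*n0 + l*d" "x + y = k*N" unfolding inS_def by blast
  define r where "r = i*p - l"
  have ipr: "i*p = l + r" using h(2) by (simp add: r_def)
  have "i*N = i*n0 + (i*p)*d" by (simp add: N_def algebra_simps)
  also have "\<dots> = i*n0 + l*d + r*d" unfolding ipr by (simp add: algebra_simps)
  finally have xb: "x + (i*p - l)*d = i*N" using h(3) by (simp add: r_def)
  show ?thesis
  proof (cases "i < k")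
    case True
    then obtain k1 where k1: "k = Suc k1" "i \<le> k1" by (cases k) auto
    have "i*N \<le> k1*N" using k1 by simp
    moreover have "x \<le> i*N" using xb by linarith
    moreover have "x + y = N + k1*N" using h(4) k1(1) by simp
    ultimately have yN: "y = N + (y - N)" "x + (y - N) = k1*N" by linarith+
    have "inS x (y - N)" unfolding inS_def
      by (rule exI[of _ k1], rule exI[of _ i], rule exI[of _ l]) (use k1 h(2,3) yN(2) in simp)
    thus ?thesis using yN by blast
  next
    case False
    hence ik: "i = k" using h(1) by simp
    have yv: "y = (i*p - l)*d" using h(4) xb ik by simp
    hence lt: "l < i*p" using assms(2) by (cases "l < i*p") auto
    then obtain i1 where i1: "i = Suc i1" by (cases i) auto
    define m where "m = (if i1*p \<le> l then l - i1*p else 0)"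
    have mp: "m < p" using lt i1 p2 by (auto simp: m_def)
    have "m \<le> l" by (simp add: m_def)
    define l1 where "l1 = l - m"
    have l1: "l = m + l1" using \<open>m \<le> l\<close> by (simp add: l1_def)
    have lm: "l1 \<le> i1*p"
    proof (cases "i1*p \<le> l")
      case True hence "m = l - i1*p" by (simp add: m_def)
      thus ?thesis using True l1 by simp
    next
      case False hence "m = 0" by (simp add: m_def)
      thus ?thesis using False l1 by simp
    qed
    have x: "x = (n0 + m*d) + (i1*n0 + l1*d)" using h(3) i1 l1 by (simp add: algebra_simps)
    have "l1*d \<le> i1*p*d" using lm by simp
    moreover have "i1*N = i1*n0 + i1*p*d" by (simp add: N_def algebra_simps)
    ultimately have b1: "i1*n0 + l1*d \<le> i1*N" by linarith
    have le1: "n0 + m*d + (N - (n0 + m*d)) = N" using mp by (simp add: N_def)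
    have tot: "x + y = N + i1*N" using h(4) ik i1 by (simp del: mult_Suc add: mult_Suc[symmetric])
    define y' where "y' = i1*N - (i1*n0 + l1*d)"
    have y: "y = (N - (n0 + m*d)) + y'" using tot x le1 b1 unfolding y'_def by linarith
    have c2: "i1 * n0 + l1 * d + y' = i1 * N" using b1 unfolding y'_def by linarith
    have "inS (i1*n0 + l1*d) y'"
      unfolding inS_def
      by (rule exI[of _ i1], rule exI[of _ i1], rule exI[of _ l1]) (simp add: c2 lm)
    thus ?thesis using x y mp by blast
  qed
qed

definition SS :: "(nat \<times> nat) set" where "SS = {(x,y). inS x y}"

lemma inSi_SS: "inSi SS v \<longleftrightarrow> fst v \<ge> 0 \<and> snd v \<ge> 0 \<and> inS (nat (fst v)) (nat (snd v))"
  by (simp add: inSi_def SS_def nonneg_def nn_def)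

lemma inSi_add:
  assumes "inSi SS (shift e w)" "inS x' y'"
  shows "inSi SS (shift (fst e + x', snd e + y') w)"
proof -
  have a: "fst (shift e w) \<ge> 0" "snd (shift e w) \<ge> 0" "inS (nat (fst (shift e w))) (nat (snd (shift e w)))"
    using assms(1) by (auto simp: inSi_SS)
  have "nat (fst (shift (fst e + x', snd e + y') w)) = nat (fst (shift e w)) + x'"
    "nat (snd (shift (fst e + x', snd e + y') w)) = nat (snd (shift e w)) + y'"
    using a by (auto simp: shift_def)
  moreover have "fst (shift (fst e + x', snd e + y') w) \<ge> 0" "snd (shift (fst e + x', snd e + y') w) \<ge> 0"
    using a by (auto simp: shift_def)
  ultimately show ?thesis using inS_add[OF a(3) assms(2)] by (simp add: inSi_SS)
qed

lemma tvalid_gens: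
  assumes "\<And>m. m \<le> p \<Longrightarrow> inSi SS (shift (n0 + m*d, N - (n0 + m*d)) w)"
  shows "tvalid SS w"
  unfolding tvalid_def
proof (intro ballI impI)
  fix s assume s: "s \<in> SS" "0 < fst s"
  then obtain m x' y' where m: "m \<le> p" "fst s = (n0 + m*d) + x'" "snd s = (N - (n0 + m*d)) + y'" "inS x' y'"
    using decT[of "fst s" "snd s"] by (auto simp: SS_def)
  have "s = (fst (n0 + m*d, N - (n0 + m*d)) + x', snd (n0 + m*d, N - (n0 + m*d)) + y')"
    using m by (simp add: prod_eq_iff)
  thus "inSi SS (shift s w)" using inSi_add[OF assms[OF m(1)] m(4)] by simp
qed

lemma uvalid_gens:
  assumes "inSi SS (shift (0, N) w)" "\<And>m. m < p \<Longrightarrow> inSi SS (shift (n0 + m*d, N - (n0 + m*d)) w)"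
  shows "uvalid SS w"
  unfolding uvalid_def
proof (intro ballI impI)
  fix s assume s: "s \<in> SS" "0 < snd s"
  hence "(\<exists>y'. snd s = N + y' \<and> inS (fst s) y') \<or>
    (\<exists>m<p. \<exists>x' y'. fst s = (n0 + m*d) + x' \<and> snd s = (N - (n0 + m*d)) + y' \<and> inS x' y')"
    using decU[of "fst s" "snd s"] by (auto simp: SS_def)
  thus "inSi SS (shift s w)"
  proof
    assume "\<exists>y'. snd s = N + y' \<and> inS (fst s) y'"
    then obtain y' where y': "snd s = N + y'" "inS (fst s) y'" by blast
    have "s = (fst (0::nat, N) + fst s, snd (0::nat, N) + y')" using y' by (simp add: prod_eq_iff)
    thus ?thesis using inSi_add[OF assms(1) y'(2)] by simp
  next
    assume "\<exists>m<p. \<exists>x' y'. fst s = (n0 + m*d) + x' \<and> snd s = (N - (n0 + m*d)) + y' \<and> inS x' y'"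
    then obtain m x' y' where m: "m < p" "fst s = (n0 + m*d) + x'" "snd s = (N - (n0 + m*d)) + y'" "inS x' y'"
      by blast
    have "s = (fst (n0 + m*d, N - (n0 + m*d)) + x', snd (n0 + m*d, N - (n0 + m*d)) + y')"
      using m by (simp add: prod_eq_iff)
    thus ?thesis using inSi_add[OF assms(2)[OF m(1)] m(4)] by simp
  qed
qed

lemma bnd: "l \<le> i*p \<Longrightarrow> i*n0 + l*d \<le> i*N"
proof -
  assume "l \<le> i*p"
  hence "l*d \<le> i*p*d" by simp
  moreover have "i*N = i*n0 + i*p*d" by (simp add: N_def algebra_simps)
  ultimately show ?thesis by linarith
qed

lemma inSi_from:
  fixes XX YY :: int
  assumes "XX = int (i*n0 + l*d)" "XX + YY = int (k*N)" "i \<le> k" "l \<le> i*p"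
  shows "inSi SS (XX, YY)"
proof -
  have "i*n0 + l*d \<le> i*N" using bnd assms(4) .
  also have "\<dots> \<le> k*N" using assms(3) by simp
  finally have le: "i*n0 + l*d \<le> k*N" .
  have YY: "YY = int (k*N - (i*n0 + l*d))" using assms(1,2) le by (simp add: of_nat_diff)
  have "inS (i*n0 + l*d) (k*N - (i*n0 + l*d))" unfolding inS_def
    by (rule exI[of _ k], rule exI[of _ i], rule exI[of _ l]) (use assms(3,4) le in simp)
  moreover have "nat XX = i*n0 + l*d" using assms(1) by (simp only: nat_int)
  moreover have "nat YY = k*N - (i*n0 + l*d)" using YY by (simp only: nat_int)
  moreover have "XX \<ge> 0" "YY \<ge> 0" using assms(1) YY by simp_all
  ultimately show ?thesis unfolding inSi_SS by simp
qed

lemma inSi_rep: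
  assumes "inSi SS (XX, YY)"
  shows "\<exists>k i l. i \<le> k \<and> l \<le> i*p \<and> XX = int (i*n0 + l*d) \<and> XX + YY = int (k*N)"
proof -
  have a: "XX \<ge> 0" "YY \<ge> 0" "inS (nat XX) (nat YY)" using assms by (auto simp: inSi_SS)
  then obtain k i l where h: "i \<le> k" "l \<le> i*p" "nat XX = i*n0 + l*d" "nat XX + nat YY = k*N"
    unfolding inS_def by blast
  have "XX = int (i*n0 + l*d)" using h(3) a(1) by (metis int_nat_eq)
  moreover have "XX + YY = int (k*N)"
  proof -
    have "int (nat XX + nat YY) = int (k*N)" using h(4) by (rule arg_cong)
    thus ?thesis using a(1,2) by simp
  qed
  ultimately show ?thesis using h(1,2) by blast
qed

lemma full_gens:
  assumes A: "inSi SS (shift (N,0) w)" and B: "inSi SS (shift (0,N) w)" and m: "m \<le> p"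
  shows "inSi SS (shift (n0 + m*d, N - (n0 + m*d)) w)"
proof -
  obtain w1 w2 where w: "w = (w1, w2)" by fastforce
  have eN: "int (N - (n0 + m*d)) = int N - int n0 - int m * int d" using m
    by (simp add: N_def of_nat_diff)
  have sh: "shift (n0 + m*d, N - (n0 + m*d)) w = (int n0 + int m * int d + w1, int N - int n0 - int m * int d + w2)"
    by (simp add: shift_def w eN)
  from B obtain k i l where hB: "i \<le> k" "l \<le> i*p" "w1 = int (i*n0 + l*d)" "w1 + (int N + w2) = int (k*N)"
    using inSi_rep[of w1 "int N + w2"] by (auto simp: shift_def w)
  show ?thesis
  proof (cases "i < k")
    case True
    have X: "int n0 + int m * int d + w1 = int ((i+1)*n0 + (l+m)*d)"
      using hB(3) by (simp add: algebra_simps)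
    have XY: "int n0 + int m * int d + w1 + (int N - int n0 - int m * int d + w2) = int (k*N)"
      using hB(4) by linarith
    have c1: "i + 1 \<le> k" using True by simp
    have c2: "l + m \<le> (i+1)*p" using hB(2) m by simp
    show ?thesis unfolding sh by (rule inSi_from[OF X XY c1 c2])
  next
    case False
    hence ik: "i = k" using hB(1) by simp
    from A obtain k' i' l' where hA: "i' \<le> k'" "l' \<le> i'*p" "int N + w1 = int (i'*n0 + l'*d)" "int N + w1 + w2 = int (k'*N)"
      using inSi_rep[of "int N + w1" w2] by (auto simp: shift_def w)
    have "int (k'*N) = int (k*N)" using hA(4) hB(4) by linarith
    hence "k'*N = k*N" by (simp only: of_nat_eq_iff)
    hence kk: "k' = k" using Npos by simp
    have eq: "(i+1)*n0 + (l+p)*d = i'*n0 + l'*d"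
    proof -
      have "int ((i+1)*n0 + (l+p)*d) = int N + w1" using hB(3) by (simp add: N_def algebra_simps)
      thus ?thesis using hA(3) by linarith
    qed
    from rep[OF eq] show ?thesis
    proof
      assume "\<exists>t. i + 1 = i' + t*d \<and> l' = l + p + t*n0"
      then obtain t where t: "i + 1 = i' + t*d" "l' = l + p + t*n0" by blast
      have lt: "l + m + t*n0 \<le> i'*p" using t(2) hA(2) m by simp
      have X: "int n0 + int m * int d + w1 = int (i'*n0 + (l + m + t*n0)*d)"
      proof -
        have "(i+1)*n0 + (l+m)*d = i'*n0 + (l + m + t*n0)*d" using t(1)
          by (simp add: algebra_simps)
        moreover have "int n0 + int m * int d + w1 = int ((i+1)*n0 + (l+m)*d)" using hB(3) by (simp add: algebra_simps)
        ultimately show ?thesis by simp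
      qed
      have XY: "int n0 + int m * int d + w1 + (int N - int n0 - int m * int d + w2) = int (k*N)"
        using hB(4) by linarith
      have c1: "i' \<le> k" using hA(1) kk by simp
      show ?thesis unfolding sh by (rule inSi_from[OF X XY c1 lt])
    next
      assume "\<exists>t. i' = i + 1 + t*d \<and> l + p = l' + t*n0"
      thus ?thesis using hA(1) kk ik by auto
    qed
  qed
qed

lemma full_generic:
  assumes A: "inSi SS (shift (N,0) w)" and B: "inSi SS (shift (0,N) w)"
  shows "tvalid SS w \<and> uvalid SS w"
  using tvalid_gens[OF full_gens[OF A B]] uvalid_gens[OF B full_gens[OF A B]] by auto

lemma gen_in_SS: "m \<le> p \<Longrightarrow> (n0 + m*d, N - (n0 + m*d)) \<in> SS"
  using inS_gen by (simp add: SS_def)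

lemma notS_tgen:
  assumes l: "l < p" and di: "d \<le> i" and mn: "(i-d)*p < l + n0"
    and S: "inS x y" and x: "x + N = i*n0 + l*d"
  shows False
proof -
  from S obtain k' i' l' where h: "i' \<le> k'" "l' \<le> i'*p" "x = i'*n0 + l'*d" unfolding inS_def by blast
  have eq: "i*n0 + l*d = (i'+1)*n0 + (l'+p)*d" using x h(3) by (simp add: N_def algebra_simps)
  from rep[OF eq] show False
  proof
    assume "\<exists>t. i = i' + 1 + t*d \<and> l' + p = l + t*n0"
    then obtain t where t: "i = i' + 1 + t*d" "l' + p = l + t*n0" by blast
    show False
    proof (cases t)
      case 0 thus False using t l by simp
    next
      case (Suc t1)
      have "i - d = i' + 1 + t1*d" using t(1) Suc by simp
      hence "(i'+1)*p \<le> (i-d)*p" by simp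
      moreover have "l + n0 \<le> l + t*n0" using Suc by simp
      moreover have "l' + p \<le> (i'+1)*p" using h(2) by simp
      ultimately show False using t(2) mn by linarith
    qed
  next
    assume "\<exists>t. i' + 1 = i + t*d \<and> l = l' + p + t*n0"
    thus False using l by auto
  qed
qed

lemma spanT_generic:
  assumes tv: "tvalid SS w"
  shows "inSi SS w \<or> (\<exists>i l k. l < p \<and> d \<le> i \<and> n0 \<le> (i-d)*p + 1 \<and> (i-d)*p < l + n0 \<and> i \<le> k \<and>
     fst w + int N = int (i*n0 + l*d) \<and> fst w + snd w + int N = int (k*N))"
proof -
  obtain w1 w2 where w: "w = (w1, w2)" by fastforce
  have gv: "inSi SS (shift (n0 + m*d, N - (n0 + m*d)) w)" if "m \<le> p" for m
  proof -
    have "0 < fst (n0 + m*d, N - (n0 + m*d))" using np by simp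
    thus ?thesis using tv gen_in_SS[OF that] unfolding tvalid_def by blast
  qed
  have "inSi SS (shift (N, 0) w)" using gv[of p] by (simp add: N_def)
  hence A: "inSi SS (int N + w1, w2)" by (simp add: shift_def w)
  define P where "P i \<longleftrightarrow> (\<exists>k l. i \<le> k \<and> l \<le> i*p \<and> int N + w1 = int (i*n0 + l*d) \<and> int N + w1 + w2 = int (k*N))" for i
  have "\<exists>i. P i" using inSi_rep[OF A] unfolding P_def by blast
  define i where "i = (LEAST i. P i)"
  have Pi: "P i" unfolding i_def using \<open>\<exists>i. P i\<close> by (rule LeastI_ex)
  have minP: "\<not> P j" if "j < i" for j using that unfolding i_def by (rule not_less_Least)
  from Pi obtain k l where h: "i \<le> k" "l \<le> i*p" "int N + w1 = int (i*n0 + l*d)" "int N + w1 + w2 = int (k*N)"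
    unfolding P_def by blast
  show ?thesis
  proof (cases "i \<ge> 1 \<and> l \<ge> p")
    case True
    obtain i1 where i1: "i = Suc i1" using True by (cases i) auto
    obtain k1 where k1: "k = Suc k1" using h(1) i1 by (cases k) auto
    obtain l1 where l1: "l = p + l1" using True le_Suc_ex by blast
    have X: "w1 = int (i1*n0 + l1*d)" using h(3) i1 l1 by (simp add: N_def algebra_simps)
    have XY: "w1 + w2 = int (k1*N)" using h(4) k1 by (simp add: algebra_simps)
    have "l1 \<le> i1*p" using h(2) i1 l1 by simp
    hence "inSi SS (w1, w2)" using inSi_from[OF X XY] h(1) i1 k1 by simp
    thus ?thesis using w by simp
  next
    case False
    have lp: "l < p"
    proof (cases "i = 0")
      case True thus ?thesis using h(2) p2 by simp
    next
      case False thus ?thesis using \<open>\<not> (1 \<le> i \<and> p \<le> l)\<close> by simp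
    qed
    define m where "m = p - l - 1"
    have mp: "m \<le> p" by (simp add: m_def)
    have lm: "l + m + 1 = p" using lp by (simp add: m_def)
    have B: "inSi SS (int n0 + int m * int d + w1, int (N - (n0 + m*d)) + w2)"
      using gv[OF mp] by (simp add: shift_def w)
    from inSi_rep[OF B] obtain k2 i2 l2 where h2: "i2 \<le> k2" "l2 \<le> i2*p"
      "int n0 + int m * int d + w1 = int (i2*n0 + l2*d)"
      "int n0 + int m * int d + w1 + (int (N - (n0 + m*d)) + w2) = int (k2*N)" by blast
    have eqi: "i*n0 + 0*d = i2*n0 + (l2+1)*d"
    proof -
      have "int (i*n0 + l*d) + int n0 + int m * int d = int N + int (i2*n0 + l2*d)" using h(3) h2(3) by linarith
      hence "i*n0 + l*d + n0 + m*d = N + (i2*n0 + l2*d)" by (simp only: of_nat_add[symmetric] of_nat_mult[symmetric] of_nat_eq_iff)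
      hence "i*n0 + (l + m + 1)*d = i2*n0 + (l2+1)*d + p*d" by (simp add: N_def algebra_simps)
      thus ?thesis unfolding lm by (simp add: algebra_simps)
    qed
    from rep[OF eqi] obtain t where t: "i = i2 + t*d" "l2 + 1 = t*n0"
      by auto
    have t1: "t \<ge> 1" using t(2) by (cases t) auto
    have di: "d \<le> i" using t(1) t1 by (metis le_add2 le_trans mult_le_mono1 mult_1)
    have "(i - t*d) \<le> i - d" using t1 by (metis diff_le_mono2 mult_le_mono1 mult_1)
    hence "i2*p \<le> (i-d)*p" using t(1) by simp
    moreover have "n0 \<le> t*n0" using t1 by simp
    ultimately have c1: "n0 \<le> (i-d)*p + 1" using h2(2) t(2) by linarith
    have c2: "(i-d)*p < l + n0"
    proof (rule ccontr)
      assume "\<not> (i-d)*p < l + n0"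
      hence le: "l + n0 \<le> (i-d)*p" by simp
      have "i*n0 + l*d = (i-d)*n0 + (l + n0)*d"
      proof -
        obtain j where j: "i = d + j" using di le_Suc_ex by blast
        show ?thesis unfolding j by (simp add: algebra_simps)
      qed
      hence "P (i - d)" unfolding P_def using h(1,3,4) le by (intro exI[of _ k] exI[of _ "l + n0"]) auto
      moreover have "i - d < i" using di d0 by simp
      ultimately show False using minP by blast
    qed
    show ?thesis using lp di c1 c2 h(1) h(3) h(4) w by (intro disjI2 exI[of _ i] exI[of _ l] exI[of _ k]) auto
  qed
qed

lemma spanU_generic:
  assumes uv: "uvalid SS w"
  shows "inSi SS w \<or> (\<exists>i l. d \<le> i \<and> l + n0 = (i-d)*p + 1 \<and>
     fst w = int (i*n0 + l*d) \<and> fst w + snd w + int N = int (i*N))"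
proof -
  obtain w1 w2 where w: "w = (w1, w2)" by fastforce
  have "inSi SS (shift (0, N) w)" using uv inS_0N Npos unfolding uvalid_def SS_def by auto
  hence A: "inSi SS (w1, int N + w2)" by (simp add: shift_def w)
  obtain p1 where p1: "p = Suc p1" using p2 by (cases p) auto
  have pp: "p1 \<le> p" using p1 by simp
  have NN0: "N = n0 + p*d" by (rule N_def)
  have NN: "N = n0 + p1*d + d" unfolding NN0 by (simp add: p1)
  hence Nd: "N - (n0 + p1*d) = d" by simp
  hence "snd (n0 + p1*d, N - (n0 + p1*d)) > 0" using d0 by simp
  hence "inSi SS (shift (n0 + p1*d, N - (n0 + p1*d)) w)" using uv gen_in_SS[OF pp] unfolding uvalid_def by blast
  hence B: "inSi SS (int n0 + int p1 * int d + w1, int (N - (n0 + p1*d)) + w2)" by (simp add: shift_def w)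
  define P where "P i \<longleftrightarrow> (\<exists>k l. i \<le> k \<and> l \<le> i*p \<and> w1 = int (i*n0 + l*d) \<and> w1 + (int N + w2) = int (k*N))" for i
  have "\<exists>i. P i" using inSi_rep[OF A] unfolding P_def by blast
  define i where "i = (LEAST i. P i)"
  have Pi: "P i" unfolding i_def using \<open>\<exists>i. P i\<close> by (rule LeastI_ex)
  have minP: "\<not> P j" if "j < i" for j using that unfolding i_def by (rule not_less_Least)
  from Pi obtain k l where h: "i \<le> k" "l \<le> i*p" "w1 = int (i*n0 + l*d)" "w1 + (int N + w2) = int (k*N)"
    unfolding P_def by blast
  show ?thesis
  proof (cases "i < k")
    case True
    obtain k1 where k1: "k = Suc k1" using True by (cases k) auto
    have XY: "w1 + w2 = int (k1*N)" using h(4) k1 by (simp add: algebra_simps)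
    have "inSi SS (w1, w2)" using inSi_from[OF h(3) XY] True k1 h(2) by simp
    thus ?thesis using w by simp
  next
    case False
    hence ik: "k = i" using h(1) by simp
    from inSi_rep[OF B] obtain k3 i3 l3 where h3: "i3 \<le> k3" "l3 \<le> i3*p"
      "int n0 + int p1 * int d + w1 = int (i3*n0 + l3*d)"
      "int n0 + int p1 * int d + w1 + (int (N - (n0 + p1*d)) + w2) = int (k3*N)" by blast
    have i1: "int N = int n0 + int p1 * int d + int d" using arg_cong[OF NN, of int] by simp
    have i2: "int (N - (n0 + p1*d)) = int d" using Nd by simp
    have h3': "int n0 + int p1 * int d + w1 + (int d + w2) = int (k3*N)" using h3(4) unfolding i2 .
    have "int (k3*N) = int (k*N)" using h3' h(4) i1 by linarith
    hence "k3*N = k*N" by (simp only: of_nat_eq_iff)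
    hence k3: "k3 = k" using Npos by simp
    have eq: "(i+1)*n0 + (l + p1)*d = i3*n0 + l3*d"
    proof -
      have "int ((i+1)*n0 + (l + p1)*d) = int n0 + int p1 * int d + w1" using h(3) by (simp add: algebra_simps)
      thus ?thesis using h3(3) by (simp only: of_nat_eq_iff)
    qed
    from rep[OF eq] obtain t where t: "i + 1 = i3 + t*d" "l3 = l + p1 + t*n0"
      using h3(1) k3 ik by fastforce
    have t1: "t \<ge> 1" using t(1) h3(1) k3 ik by (cases t) auto
    have "d \<le> t*d" using t1 by simp
    hence d1: "d \<le> i + 1" using t(1) by linarith
    have "i3 \<le> i + 1 - d" using t(1) \<open>d \<le> t*d\<close> by linarith
    hence "i3*p \<le> (i + 1 - d)*p" by simp
    moreover have "n0 \<le> t*n0" using t1 by simp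
    ultimately have le1: "l + p1 + n0 \<le> (i + 1 - d)*p" using h3(2) t(2) by linarith
    have di: "d \<le> i"
    proof (rule ccontr)
      assume "\<not> d \<le> i"
      hence "i + 1 - d = 0" using d1 by simp
      thus False using le1 np by simp
    qed
    have "(i + 1 - d)*p = (i-d)*p + p" using di by (simp add: Suc_diff_le)
    hence c1: "l + n0 \<le> (i-d)*p + 1" using le1 p1 by linarith
    have c2: "(i-d)*p < l + n0"
    proof (rule ccontr)
      assume "\<not> (i-d)*p < l + n0"
      hence le: "l + n0 \<le> (i-d)*p" by simp
      have "i*n0 + l*d = (i-d)*n0 + (l + n0)*d"
      proof -
        obtain j where j: "i = d + j" using di le_Suc_ex by blast
        show ?thesis unfolding j by (simp add: algebra_simps)
      qed
      hence "P (i - d)" unfolding P_def using h(1,3,4) le by (intro exI[of _ k] exI[of _ "l + n0"]) auto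
      moreover have "i - d < i" using di d0 by simp
      ultimately show False using minP by blast
    qed
    have "w1 + w2 + int N = int (i*N)" using h(4) ik by simp
    thus ?thesis using di c1 c2 h(3) w by (intro disjI2 exI[of _ i] exI[of _ l]) auto
  qed
qed

end

context arith begin

lemma inS_0kN: "inS 0 (k*N)"
  unfolding inS_def by (rule exI[of _ k], rule exI[of _ 0], rule exI[of _ 0]) simp

lemma inS_kN0: "inS (k*N) 0"
proof -
  have "k*N = k*n0 + (k*p)*d" by (simp add: N_def algebra_simps)
  thus ?thesis unfolding inS_def by (intro exI[of _ k] exI[of _ "k*p"]) simp
qed

definition tgen :: "nat \<Rightarrow> nat \<Rightarrow> nat \<times> nat" where
  "tgen i0 l = (i0*n0 + l*d + 1 - N, (i0*p - l)*d)"

lemma tgen_facts: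
  assumes l: "l < p" and di: "d \<le> i0" and c1: "n0 \<le> (i0-d)*p + 1"
  shows "i0*n0 + l*d > N" "fst (tgen i0 l) \<ge> 2" "fst (tgen i0 l) + snd (tgen i0 l) = (i0 - 1)*N + 1"
    "l \<le> i0*p"
proof -
  have "p \<le> (i0-d)*p" using c1 np by linarith
  hence "1 \<le> i0 - d" using p2 by (cases "i0 - d") auto
  hence i1: "d + 1 \<le> i0" by simp
  have "(d+1)*n0 \<le> i0*n0" using i1 by (rule mult_le_mono1)
  hence A1: "n0 + n0*d \<le> i0*n0" by (simp add: algebra_simps)
  have A2: "p*d < n0*d" using mult_strict_right_mono[OF np d0] .
  have A3: "N = n0 + p*d" by (rule N_def)
  show gt: "i0*n0 + l*d > N" using A1 A2 A3 by linarith
  thus "fst (tgen i0 l) \<ge> 2" by (simp add: tgen_def)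
  show lp: "l \<le> i0*p" using l i1 by (metis le_add2 le_trans less_imp_le mult_le_mono1 mult_1 add.commute)
  obtain r where r: "i0*p = l + r" using lp le_Suc_ex by blast
  have "i0*N = i0*n0 + l*d + r*d" using r by (simp add: N_def algebra_simps)
  moreover obtain i1' where "i0 = Suc i1'" using i1 by (cases i0) auto
  ultimately show "fst (tgen i0 l) + snd (tgen i0 l) = (i0 - 1)*N + 1"
    using gt r by (simp add: tgen_def)
qed

lemma validT_of:
  assumes tv: "tvalid SS (int a - 1, int b)" and s: "s \<in> SS" "fst s > 0"
  shows "(a + (fst s - 1), b + snd s) \<in> SS"
proof -
  have "inSi SS (shift s (int a - 1, int b))" using tv s unfolding tvalid_def by blast
  moreover have "nn (shift s (int a - 1, int b)) = (a + (fst s - 1), b + snd s)"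
    using s(2) by (simp add: nn_def shift_def nat_add_distrib)
  ultimately show ?thesis by (simp add: inSi_def)
qed

lemma validU_of:
  assumes uv: "uvalid SS (int a, int b - 1)" and s: "s \<in> SS" "snd s > 0"
  shows "(a + fst s, b + (snd s - 1)) \<in> SS"
proof -
  have "inSi SS (shift s (int a, int b - 1))" using uv s unfolding uvalid_def by blast
  moreover have "nn (shift s (int a, int b - 1)) = (a + fst s, b + (snd s - 1))"
    using s(2) by (simp add: nn_def shift_def nat_add_distrib)
  ultimately show ?thesis by (simp add: inSi_def)
qed

lemma inSi_fromN:
  assumes e: "n0 + m*d + x = N + (i*n0 + l*d)" and t: "x + \<beta> = k*N" and ik: "i \<le> k" and lp: "l \<le> i*p" and m: "m \<le> p"
  shows "inSi SS (shift (n0 + m*d, N - (n0 + m*d)) (int x - int N, int \<beta>))"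
proof -
  have le: "n0 + m*d \<le> N" using m by (simp add: N_def)
  have X: "int (n0 + m*d) + (int x - int N) = int (i*n0 + l*d)"
    using arg_cong[OF e, of int] by simp
  have XY: "int (n0 + m*d) + (int x - int N) + (int (N - (n0 + m*d)) + int \<beta>) = int (k*N)"
    using arg_cong[OF t, of int] le by (simp add: of_nat_diff)
  show ?thesis unfolding shift_def fst_conv snd_conv
    by (rule inSi_from[OF X XY ik lp])
qed

lemma tgen_tvalid:
  assumes l: "l < p" and di: "d \<le> i0" and c1: "n0 \<le> (i0-d)*p + 1"
  shows "tvalid SS (int (fst (tgen i0 l)) - 1, int (snd (tgen i0 l)))"
proof -
  note tf = tgen_facts[OF l di c1]
  define x where "x = i0*n0 + l*d"
  define \<beta> where "\<beta> = (i0*p - l)*d"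
  have w: "(int (fst (tgen i0 l)) - 1, int (snd (tgen i0 l))) = (int x - int N, int \<beta>)"
    using tf(1) by (simp add: tgen_def x_def \<beta>_def of_nat_diff)
  obtain r where r: "i0*p = l + r" using tf(4) le_Suc_ex by blast
  have tot: "x + \<beta> = i0*N" using r by (simp add: x_def \<beta>_def N_def algebra_simps)
  show ?thesis unfolding w
  proof (rule tvalid_gens)
    fix m assume m: "m \<le> p"
    show "inSi SS (shift (n0 + m*d, N - (n0 + m*d)) (int x - int N, int \<beta>))"
    proof (cases "p \<le> l + m")
      case True
      define e where "e = l + m - p"
      have e: "l + m = p + e" using True by (simp add: e_def)
      have "e \<le> i0*p" using e m tf(4) by linarith
      moreover have "n0 + m*d + x = N + (i0*n0 + e*d)"
        using arg_cong[OF e, of "\<lambda>z. z*d"] by (simp add: x_def N_def algebra_simps)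
      ultimately show ?thesis using inSi_fromN[OF _ tot _ _ m] by simp
    next
      case False
      define e where "e = p - (l + m + 1)"
      have e: "p = l + m + 1 + e" using False by (simp add: e_def)
      obtain j where j: "i0 = d + j" using di le_Suc_ex by blast
      have "n0 + m*d + x = N + (j*n0 + (n0 - 1 - e)*d)"
      proof -
        have "e + 1 \<le> n0" using e np by linarith
        define f where "f = n0 - (e + 1)"
        have f: "n0 = e + 1 + f" using \<open>e + 1 \<le> n0\<close> by (simp add: f_def)
        show ?thesis unfolding x_def N_def unfolding j e f by (simp add: algebra_simps)
      qed
      moreover have "n0 - 1 - e \<le> j*p" using c1 j by simp
      moreover have "j \<le> i0" using j by simp
      ultimately show ?thesis using inSi_fromN[OF _ tot _ _ m] by blast
    qed
  qed
qed

lemma nn_in_SS: "inSi SS w \<Longrightarrow> nn w \<in> SS \<and> w = (int (fst (nn w)), int (snd (nn w)))"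
  by (auto simp: inSi_def nn_def nonneg_def prod_eq_iff)

lemma Tg_span:
  assumes G2: "\<And>i l. l < p \<Longrightarrow> d \<le> i \<Longrightarrow> n0 \<le> (i-d)*p + 1 \<Longrightarrow> (i-d)*p < l + n0 \<Longrightarrow> i = i0 \<and> l \<in> L"
    and tv: "tvalid SS w"
  shows "\<exists>ab\<in>insert (1,0) (tgen i0 ` L). \<exists>s\<in>SS. w = (int (fst ab) - 1 + int (fst s), int (snd ab) + int (snd s))"
proof -
  from spanT_generic[OF tv] show ?thesis
  proof
    assume "inSi SS w"
    hence "nn w \<in> SS" "w = (int (fst (nn w)), int (snd (nn w)))" using nn_in_SS by blast+
    thus ?thesis by (intro bexI[of _ "(1,0)"] bexI[of _ "nn w"]) auto
  next
    assume "\<exists>i l k. l < p \<and> d \<le> i \<and> n0 \<le> (i-d)*p + 1 \<and> (i-d)*p < l + n0 \<and> i \<le> k \<and>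
     fst w + int N = int (i*n0 + l*d) \<and> fst w + snd w + int N = int (k*N)"
    then obtain i l k where h: "l < p" "d \<le> i" "n0 \<le> (i-d)*p + 1" "(i-d)*p < l + n0" "i \<le> k"
      "fst w + int N = int (i*n0 + l*d)" "fst w + snd w + int N = int (k*N)" by blast
    from G2[OF h(1-4)] have ii: "i = i0" and lL: "l \<in> L" by auto
    note tf = tgen_facts[OF h(1) h(2) h(3)]
    obtain r where r: "i*p = l + r" using tf(4) le_Suc_ex by blast
    have tot: "i*n0 + l*d + (i*p - l)*d = i*N" using r by (simp add: N_def algebra_simps)
    have s: "(0, (k - i)*N) \<in> SS" using inS_0kN by (simp add: SS_def)
    have e1: "fst w = int (fst (tgen i l)) - 1 + int (fst (0::nat, (k - i)*N))"
      using h(6) tf(1) by (simp add: tgen_def of_nat_diff)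
    have "int ((k - i)*N) = int (k*N) - int (i*N)" using h(5) by (simp add: of_nat_diff diff_mult_distrib)
    hence e2: "snd w = int (snd (tgen i l)) + int (snd (0::nat, (k - i)*N))"
      using h(6,7) arg_cong[OF tot, of int] by (simp add: tgen_def)
    show ?thesis using ii lL s e1 e2
      by (intro bexI[of _ "tgen i l"] bexI[of _ "(0, (k - i)*N)"]) (auto simp: prod_eq_iff)
  qed
qed

lemma Tg_indep:
  assumes L1: "\<And>l. l \<in> L \<Longrightarrow> l < p \<and> d \<le> i0 \<and> n0 \<le> (i0-d)*p + 1 \<and> (i0-d)*p < l + n0"
    and ab: "(a,b) \<in> insert (1,0) (tgen i0 ` L)" and ab': "(a',b') \<in> insert (1,0) (tgen i0 ` L)"
    and s: "s \<in> SS" and eq: "(a' + fst s, b' + snd s) = (a, b)"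
  shows "s = (0,0)"
proof -
  have sumT: "fst (tgen i0 l) + snd (tgen i0 l) = (i0 - 1)*N + 1" "fst (tgen i0 l) \<ge> 2" if "l \<in> L" for l
    using tgen_facts[of l i0] L1[OF that] by auto
  consider "(a,b) = (1,0)" "(a',b') = (1,0)" | l where "(a,b) = tgen i0 l" "l \<in> L" "(a',b') = (1,0)"
    | l' where "(a,b) = (1,0)" "(a',b') = tgen i0 l'" "l' \<in> L"
    | l l' where "(a,b) = tgen i0 l" "l \<in> L" "(a',b') = tgen i0 l'" "l' \<in> L"
    using ab ab' by blast
  thus ?thesis
  proof cases
    case 1 thus ?thesis using eq by (auto simp: prod_eq_iff)
  next
    case (2 l)
    note Ll = L1[OF 2(2)]
    note tf = tgen_facts[of l i0] 
    have s1: "fst s = i0*n0 + l*d - N" "snd s = (i0*p - l)*d" using 2 eq by (auto simp: tgen_def)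
    have "inS (fst s) (snd s)" using s by (simp add: SS_def case_prod_unfold)
    moreover have "fst s + N = i0*n0 + l*d" using s1(1) tf Ll by simp
    ultimately show ?thesis using notS_tgen[of l i0 "fst s" "snd s"] Ll by blast
  next
    case (3 l')
    have "a' = fst (tgen i0 l')" using 3(2) by (metis fst_conv)
    hence "a' \<ge> 2" using sumT(2)[OF 3(3)] by simp
    moreover have "a' + fst s = 1" using eq 3(1) by auto
    ultimately show ?thesis by simp
  next
    case (4 l l')
    have "fst s + snd s = 0" using eq sumT(1)[OF 4(2)] sumT(1)[OF 4(4)] 4 by (auto simp: prod_eq_iff)
    thus ?thesis by (simp add: prod_eq_iff)
  qed
qed

lemma Tg_valid:
  assumes L1: "\<And>l. l \<in> L \<Longrightarrow> l < p \<and> d \<le> i0 \<and> n0 \<le> (i0-d)*p + 1 \<and> (i0-d)*p < l + n0"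
    and ab: "(a,b) \<in> insert (1,0) (tgen i0 ` L)" and s: "s \<in> SS" "fst s > 0"
  shows "(a + (fst s - 1), b + snd s) \<in> SS"
proof -
  from ab consider "(a,b) = (1,0)" | l where "(a,b) = tgen i0 l" "l \<in> L" by blast
  thus ?thesis
  proof cases
    case 1 thus ?thesis using s by simp
  next
    case (2 l)
    have "tvalid SS (int a - 1, int b)" using tgen_tvalid[of l i0] L1[OF 2(2)] 2(1) by (metis fst_conv snd_conv)
    thus ?thesis using validT_of s by blast
  qed
qed

lemma Ug_all:
  assumes U1: "uvalid SS (int A, int B - 1)" and U3: "A + B = ju*N + 1" and U4: "A > 0"
    and U2: "\<And>i l. d \<le> i \<Longrightarrow> l + n0 = (i-d)*p + 1 \<Longrightarrow> \<exists>q. i*n0 + l*d = A + q*N \<and> i = ju + 1 + q"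
    and U5: "B \<ge> 1 \<Longrightarrow> \<not> inS A (B - 1)"
  shows "\<And>a b s. (a,b) \<in> {(0,1),(A,B)} \<Longrightarrow> s \<in> SS \<Longrightarrow> snd s > 0 \<Longrightarrow> (a + fst s, b + (snd s - 1)) \<in> SS"
    and "\<And>w. uvalid SS w \<Longrightarrow> \<exists>ab\<in>{(0,1),(A,B)}. \<exists>s\<in>SS. w = (int (fst ab) + int (fst s), int (snd ab) - 1 + int (snd s))"
    and "\<And>a b a' b' s. (a,b) \<in> {(0,1),(A,B)} \<Longrightarrow> (a',b') \<in> {(0,1),(A,B)} \<Longrightarrow> s \<in> SS \<Longrightarrow> (a' + fst s, b' + snd s) = (a, b) \<Longrightarrow> s = (0,0)"
proof -
  fix a b s assume ab: "(a,b) \<in> {(0,1),(A,B)}" and s: "s \<in> SS" "snd s > 0"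
  show "(a + fst s, b + (snd s - 1)) \<in> SS"
  proof (cases "(a,b) = (0,1)")
    case True thus ?thesis using s by simp
  next
    case False hence "(a,b) = (A,B)" using ab by blast
    thus ?thesis using validU_of[OF U1 s] by simp
  qed
next
  fix w assume uv: "uvalid SS w"
  from spanU_generic[OF uv] show "\<exists>ab\<in>{(0,1),(A,B)}. \<exists>s\<in>SS. w = (int (fst ab) + int (fst s), int (snd ab) - 1 + int (snd s))"
  proof
    assume "inSi SS w"
    hence "nn w \<in> SS" "w = (int (fst (nn w)), int (snd (nn w)))" using nn_in_SS by blast+
    thus ?thesis by (intro bexI[of _ "(0,1)"] bexI[of _ "nn w"]) auto
  next
    assume "\<exists>i l. d \<le> i \<and> l + n0 = (i-d)*p + 1 \<and> fst w = int (i*n0 + l*d) \<and> fst w + snd w + int N = int (i*N)"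
    then obtain i l where h: "d \<le> i" "l + n0 = (i-d)*p + 1" "fst w = int (i*n0 + l*d)" "fst w + snd w + int N = int (i*N)"
      by blast
    from U2[OF h(1,2)] obtain q where q: "i*n0 + l*d = A + q*N" "i = ju + 1 + q" by blast
    have sS: "(q*N, 0) \<in> SS" using inS_kN0 by (simp add: SS_def)
    have e1: "fst w = int A + int (q*N)" using h(3) q(1) by simp
    have "int (i*N) = int (ju*N) + int N + int (q*N)" using q(2) by (simp add: algebra_simps)
    moreover have "int A + int B = int (ju*N) + 1" using arg_cong[OF U3, of int] by simp
    ultimately have e2: "snd w = int B - 1 + int (snd (q*N, 0::nat))" using h(4) e1 by simp
    show ?thesis using sS e1 e2 by (intro bexI[of _ "(A,B)"] bexI[of _ "(q*N, 0)"]) (auto simp: prod_eq_iff)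
  qed
next
  fix a b a' b' s assume ab: "(a,b) \<in> {(0,1),(A,B)}" and ab': "(a',b') \<in> {(0,1),(A,B)}"
    and s: "s \<in> SS" and eq: "(a' + fst s, b' + snd s) = (a, b)"
  show "s = (0,0)"
  proof (cases "(a,b) = (a',b')")
    case True thus ?thesis using eq by (simp add: prod_eq_iff)
  next
    case False
    hence "((a,b) = (A,B) \<and> (a',b') = (0,1)) \<or> ((a,b) = (0,1) \<and> (a',b') = (A,B))" using ab ab' by blast
    thus ?thesis
    proof
      assume c: "(a,b) = (A,B) \<and> (a',b') = (0,1)"
      hence "fst s = A" "1 + snd s = B" using eq by auto
      moreover have "inS (fst s) (snd s)" using s by (simp add: SS_def case_prod_unfold)
      ultimately show ?thesis using U5 by auto
    next
      assume c: "(a,b) = (0,1) \<and> (a',b') = (A,B)"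
      thus ?thesis using eq U4 by auto
    qed
  qed
qed

end

lemma H1: "(x::nat)*p < (y+1)*p \<Longrightarrow> x \<le> y"
  by (metis Suc_eq_plus1 less_Suc_eq_le mult_less_cancel2)
lemma H2: "(a::nat)*p \<le> x*p + 1 \<Longrightarrow> 2 \<le> p \<Longrightarrow> a \<le> x"
proof (rule ccontr)
  assume h: "a*p \<le> x*p + 1" "2 \<le> p" "\<not> a \<le> x"
  hence "(x+1)*p \<le> a*p" by (intro mult_le_mono1) simp
  thus False using h by simp
qed
lemma H3: "(a::nat)*p + 1 \<le> x*p \<Longrightarrow> a + 1 \<le> x"
proof (rule ccontr)
  assume h: "a*p + 1 \<le> x*p" "\<not> a + 1 \<le> x"
  hence "x \<le> a" by simp
  hence "x*p \<le> a*p" by (rule mult_le_mono1)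
  thus False using h(1) by linarith
qed

lemma U3_raw: "(d::nat) > 0 \<Longrightarrow> NN > 0 \<Longrightarrow> a'*NN + d + (d-1)*(NN-1) = (a' + d - 1)*NN + 1"
proof -
  assume "d > 0" "NN > 0"
  then obtain d1 N1 where "d = Suc d1" "NN = Suc N1" by (metis gr0_implies_Suc)
  thus ?thesis by (simp add: algebra_simps)
qed

locale carith = arith +
  fixes a b :: nat
  assumes nab: "n0 = a*p + b" and bp: "b < p"
begin

lemma Nab: "N = a*p + b + p*d"
proof -
  have "N = n0 + p*d" by (rule N_def)
  thus ?thesis using nab by simp
qed

lemma U3_gen: "a'*N + d + (d-1)*(N-1) = (a' + d - 1)*N + 1"
  using U3_raw[OF d0 Npos] .

lemma inS_deg:
  assumes "inS x y" "x + y = k*N"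
  obtains i l where "i \<le> k" "l \<le> i*p" "x = i*n0 + l*d"
proof -
  from assms(1) obtain k' i l where h: "i \<le> k'" "l \<le> i*p" "x = i*n0 + l*d" "x + y = k'*N" unfolding inS_def by blast
  have "k'*N = k*N" using h(4) assms(2) by metis
  hence "k' = k" using Npos by auto
  thus ?thesis using that h by blast
qed

lemma U1_helper:
  assumes A: "A = i1*n0 + l1*d" and AB: "A + B = ju*N + 1" and i1: "i1 \<le> ju + 1" and l1: "l1 \<le> i1*p"
    and gm: "\<And>m. m < p \<Longrightarrow> \<exists>i l. n0 + m*d + A = i*n0 + l*d \<and> i \<le> ju + 1 \<and> l \<le> i*p"
  shows "uvalid SS (int A, int B - 1)"
proof (rule uvalid_gens)
  have AB': "int A + int B = int (ju*N) + 1" using arg_cong[OF AB, of int] by simp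
  show "inSi SS (shift (0, N) (int A, int B - 1))"
    unfolding shift_def fst_conv snd_conv
  proof (rule inSi_from[of _ i1 l1 _ "ju + 1"])
    show "int 0 + int A = int (i1*n0 + l1*d)" using A by simp
    show "int 0 + int A + (int N + (int B - 1)) = int ((ju + 1)*N)" using AB' by (simp add: algebra_simps)
  qed (use i1 l1 in auto)
next
  fix m assume m: "m < p"
  from gm[OF m] obtain i l where h: "n0 + m*d + A = i*n0 + l*d" "i \<le> ju + 1" "l \<le> i*p" by blast
  have AB': "int A + int B = int (ju*N) + 1" using arg_cong[OF AB, of int] by simp
  have le: "n0 + m*d \<le> N" using m by (simp add: N_def)
  show "inSi SS (shift (n0 + m*d, N - (n0 + m*d)) (int A, int B - 1))"
    unfolding shift_def fst_conv snd_conv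
  proof (rule inSi_from[of _ i l _ "ju + 1"])
    show "int (n0 + m*d) + int A = int (i*n0 + l*d)" using arg_cong[OF h(1), of int] by simp
    show "int (n0 + m*d) + int A + (int (N - (n0 + m*d)) + (int B - 1)) = int ((ju + 1)*N)"
      using AB' le by (simp add: of_nat_diff algebra_simps)
  qed (use h in auto)
qed

lemma U5_helper:
  assumes A: "A = i1*n0 + l1*d" and AB: "A + B = ju*N + 1" and i1: "ju < i1" and l1: "(i1 - d)*p < l1 + n0"
  and B1: "B \<ge> 1"
  shows "\<not> inS A (B - 1)"
proof
  assume S: "inS A (B - 1)"
  show False
  proof -
    have "A + (B - 1) = ju*N" using AB B1 by simp
    from inS_deg[OF S this] obtain i l where h: "i \<le> ju" "l \<le> i*p" "A = i*n0 + l*d" by blast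
    have eq: "i1*n0 + l1*d = i*n0 + l*d" using A h(3) by simp
    from rep[OF eq] show False
    proof
      assume "\<exists>t. i1 = i + t*d \<and> l = l1 + t*n0"
      then obtain t where t: "i1 = i + t*d" "l = l1 + t*n0" by blast
      have t1: "t \<ge> 1" using t(1) h(1) i1 by (cases t) auto
      have "d \<le> t*d" using t1 by simp
      hence "i \<le> i1 - d" using t(1) by linarith
      hence "i*p \<le> (i1 - d)*p" by simp
      moreover have "n0 \<le> t*n0" using t1 by simp
      ultimately show False using h(2) t(2) l1 by linarith
    next
      assume "\<exists>t. i = i1 + t*d \<and> l1 = l + t*n0"
      thus False using h(1) i1 by auto
    qed
  qed
qed

lemma c0_L1: "b = 0 \<Longrightarrow> l \<in> {l. 1 \<le> l \<and> l \<le> p - 1} \<Longrightarrow> l < p \<and> d \<le> a + d \<and> n0 \<le> (a + d - d)*p + 1 \<and> (a + d - d)*p < l + n0"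
  using nab p2 by auto

lemma c0_G2: assumes b0: "b = 0" and h: "l < p" "d \<le> i" "n0 \<le> (i-d)*p + 1" "(i-d)*p < l + n0"
  shows "i = a + d \<and> l \<in> {l. 1 \<le> l \<and> l \<le> p - 1}"
proof -
  have n: "n0 = a*p" using nab b0 by simp
  have "a \<le> i - d" using H2[of a p "i - d"] h(3) p2 n by simp
  moreover have "(i-d)*p < (a+1)*p" using h(4) h(1) n by simp
  hence "i - d \<le> a" by (rule H1)
  ultimately have "i - d = a" by simp
  thus ?thesis using h n by auto
qed

lemma c0_U1: "b = 0 \<Longrightarrow> uvalid SS (int (a*N + d), int ((d-1)*(N-1)) - 1)"
proof -
  assume b0: "b = 0"
  have n: "n0 = a*p" using nab b0 by simp
  have NN: "N = a*p + p*d" using Nab b0 by simp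
  show ?thesis
  proof (rule U1_helper[of _ "a + d" 1 _ "a + d - 1"])
    show "a*N + d = (a + d)*n0 + 1*d" unfolding NN unfolding n by (simp add: algebra_simps)
    show "a*N + d + (d-1)*(N-1) = (a + d - 1)*N + 1" by (rule U3_gen)
    show "a + d \<le> a + d - 1 + 1" by simp
    show "1 \<le> (a + d)*p" using mult_le_mono[of 1 "a+d" 1 p] d0 p2 by simp
  next
    fix m assume m: "m < p"
    show "\<exists>i l. n0 + m*d + (a*N + d) = i*n0 + l*d \<and> i \<le> a + d - 1 + 1 \<and> l \<le> i*p"
    proof (intro exI conjI)
      show "n0 + m*d + (a*N + d) = (a+1)*n0 + (1 + m + n0)*d" unfolding NN unfolding n by (simp add: algebra_simps)
      show "a + 1 \<le> a + d - 1 + 1" using d0 by simp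
      show "1 + m + n0 \<le> (a+1)*p" using m n by simp
    qed
  qed
qed

lemma c0_U2: assumes b0: "b = 0" and h: "d \<le> i" "l + n0 = (i-d)*p + 1"
  shows "\<exists>q. i*n0 + l*d = a*N + d + q*N \<and> i = (a + d - 1) + 1 + q"
proof -
  have n: "n0 = a*p" using nab b0 by simp
  have NN: "N = a*p + p*d" using Nab b0 by simp
  have "a \<le> i - d" using H2[of a p "i - d"] h(2) p2 n by simp
  then obtain q where q: "i = a + d + q" using h(1) by (metis add.commute le_Suc_ex le_diff_conv2)
  have l: "l = q*p + 1" using h(2) q n by (simp add: algebra_simps)
  show ?thesis
    unfolding NN by (rule exI[of _ q]) (use d0 in \<open>simp add: q l n algebra_simps\<close>)
qed

lemma c0_U5: "b = 0 \<Longrightarrow> (d-1)*(N-1) \<ge> 1 \<Longrightarrow> \<not> inS (a*N + d) ((d-1)*(N-1) - 1)"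
proof -
  assume b0: "b = 0" and B1: "(d-1)*(N-1) \<ge> 1"
  have n: "n0 = a*p" using nab b0 by simp
  have NN: "N = a*p + p*d" using Nab b0 by simp
  show ?thesis
  proof (rule U5_helper[of _ "a + d" 1 _ "a + d - 1"])
    show "a*N + d = (a + d)*n0 + 1*d" unfolding NN unfolding n by (simp add: algebra_simps)
    show "a*N + d + (d-1)*(N-1) = (a + d - 1)*N + 1" by (rule U3_gen)
    show "a + d - 1 < a + d" using d0 by simp
    show "(a + d - d)*p < 1 + n0" using n by simp
  qed (rule B1)
qed

lemma c1_L1: "b = 1 \<Longrightarrow> l \<in> {l. l \<le> p - 1} \<Longrightarrow> l < p \<and> d \<le> a + d \<and> n0 \<le> (a + d - d)*p + 1 \<and> (a + d - d)*p < l + n0"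
  using nab p2 by auto

lemma c1_G2: assumes b1: "b = 1" and h: "l < p" "d \<le> i" "n0 \<le> (i-d)*p + 1" "(i-d)*p < l + n0"
  shows "i = a + d \<and> l \<in> {l. l \<le> p - 1}"
proof -
  have n: "n0 = a*p + 1" using nab b1 by simp
  have "a*p \<le> (i-d)*p" using h(3) n by simp
  hence "a \<le> i - d" using p2 by simp
  moreover have "(i-d)*p < (a+1)*p" using h(4) h(1) n by simp
  hence "i - d \<le> a" by (rule H1)
  ultimately have "i - d = a" by simp
  thus ?thesis using h n by auto
qed

lemma c1_U1: "b = 1 \<Longrightarrow> uvalid SS (int (a*N + d), int ((d-1)*(N-1)) - 1)"
proof -
  assume b1: "b = 1"
  have n: "n0 = a*p + 1" using nab b1 by simp
  have NN: "N = a*p + 1 + p*d" using Nab b1 by simp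
  show ?thesis
  proof (rule U1_helper[of _ "a + d" 0 _ "a + d - 1"])
    show "a*N + d = (a + d)*n0 + 0*d" unfolding NN unfolding n by (simp add: algebra_simps)
    show "a*N + d + (d-1)*(N-1) = (a + d - 1)*N + 1" by (rule U3_gen)
    show "a + d \<le> a + d - 1 + 1" by simp
    show "0 \<le> (a + d)*p" by simp
  next
    fix m assume m: "m < p"
    show "\<exists>i l. n0 + m*d + (a*N + d) = i*n0 + l*d \<and> i \<le> a + d - 1 + 1 \<and> l \<le> i*p"
    proof (intro exI conjI)
      show "n0 + m*d + (a*N + d) = (a+1)*n0 + (m + n0)*d" unfolding NN unfolding n by (simp add: algebra_simps)
      show "a + 1 \<le> a + d - 1 + 1" using d0 by simp
      show "m + n0 \<le> (a+1)*p" using m n by simp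
    qed
  qed
qed

lemma c1_U2: assumes b1: "b = 1" and h: "d \<le> i" "l + n0 = (i-d)*p + 1"
  shows "\<exists>q. i*n0 + l*d = a*N + d + q*N \<and> i = (a + d - 1) + 1 + q"
proof -
  have n: "n0 = a*p + 1" using nab b1 by simp
  have NN: "N = a*p + 1 + p*d" using Nab b1 by simp
  have "a*p \<le> (i-d)*p" using h(2) n by linarith
  hence "a \<le> i - d" using mult_le_cancel2[of a p "i-d"] p2 by simp
  then obtain q where q: "i = a + d + q" using h(1) by (metis add.commute le_Suc_ex le_diff_conv2)
  have l: "l = q*p" using h(2) q n by (simp add: algebra_simps)
  show ?thesis
    unfolding NN by (rule exI[of _ q]) (use d0 in \<open>simp add: q l n algebra_simps\<close>)
qed

lemma c1_U5: "b = 1 \<Longrightarrow> (d-1)*(N-1) \<ge> 1 \<Longrightarrow> \<not> inS (a*N + d) ((d-1)*(N-1) - 1)"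
proof -
  assume b1: "b = 1" and B1: "(d-1)*(N-1) \<ge> 1"
  have n: "n0 = a*p + 1" using nab b1 by simp
  have NN: "N = a*p + 1 + p*d" using Nab b1 by simp
  show ?thesis
  proof (rule U5_helper[of _ "a + d" 0 _ "a + d - 1"])
    show "a*N + d = (a + d)*n0 + 0*d" unfolding NN unfolding n by (simp add: algebra_simps)
    show "a*N + d + (d-1)*(N-1) = (a + d - 1)*N + 1" by (rule U3_gen)
    show "a + d - 1 < a + d" using d0 by simp
    show "(a + d - d)*p < 0 + n0" using n by simp
  qed (rule B1)
qed

lemma c2_L1: "2 \<le> b \<Longrightarrow> l \<in> {l. p - b + 1 \<le> l \<and> l \<le> p - 1} \<Longrightarrow> l < p \<and> d \<le> a + d + 1 \<and> n0 \<le> (a + d + 1 - d)*p + 1 \<and> (a + d + 1 - d)*p < l + n0"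
  using nab p2 bp by auto

lemma c2_G2: assumes b2: "2 \<le> b" and h: "l < p" "d \<le> i" "n0 \<le> (i-d)*p + 1" "(i-d)*p < l + n0"
  shows "i = a + d + 1 \<and> l \<in> {l. p - b + 1 \<le> l \<and> l \<le> p - 1}"
proof -
  have "a*p + 1 \<le> (i-d)*p" using h(3) nab b2 by simp
  hence "a + 1 \<le> i - d" by (rule H3)
  moreover have "(i-d)*p < (a+1+1)*p" using h(4) h(1) nab bp by simp
  hence "i - d \<le> a + 1" by (rule H1)
  ultimately have "i - d = a + 1" by simp
  thus ?thesis using h nab bp by auto
qed

lemma c2_U1: "2 \<le> b \<Longrightarrow> uvalid SS (int ((a+1)*N + d), int ((d-1)*(N-1)) - 1)"
proof -
  assume b2: "2 \<le> b"
  define c where "c = p - b - 1"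
  have pc: "p = b + c + 1" using bp by (simp add: c_def)
  have NN: "N = a*p + b + p*d" by (rule Nab)
  show ?thesis
  proof (rule U1_helper[of _ "a + d + 1" "c + 2" _ "a + d"])
    show "(a+1)*N + d = (a + d + 1)*n0 + (c + 2)*d" unfolding NN unfolding nab unfolding pc by (simp add: algebra_simps)
    show "(a+1)*N + d + (d-1)*(N-1) = (a + d)*N + 1" using U3_gen[of "a+1"] d0 by simp
    show "a + d + 1 \<le> a + d + 1" by simp
    show "c + 2 \<le> (a + d + 1)*p" using pc b2 by (simp add: algebra_simps)
  next
    fix m assume m: "m < p"
    show "\<exists>i l. n0 + m*d + ((a+1)*N + d) = i*n0 + l*d \<and> i \<le> a + d + 1 \<and> l \<le> i*p"
    proof (intro exI conjI)
      show "n0 + m*d + ((a+1)*N + d) = (a+2)*n0 + ((a+1)*p + m + 1)*d" unfolding NN unfolding nab by (simp add: algebra_simps)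
      show "a + 2 \<le> a + d + 1" using d0 by simp
      show "(a+1)*p + m + 1 \<le> (a+2)*p" using m by simp
    qed
  qed
qed

lemma c2_U2: assumes b2: "2 \<le> b" and h: "d \<le> i" "l + n0 = (i-d)*p + 1"
  shows "\<exists>q. i*n0 + l*d = (a+1)*N + d + q*N \<and> i = (a + d) + 1 + q"
proof -
  define c where "c = p - b - 1"
  have pc: "p = b + c + 1" using bp by (simp add: c_def)
  have NN: "N = a*p + b + p*d" by (rule Nab)
  have "a*p + 1 \<le> (i-d)*p" using h(2) nab b2 by simp
  hence "a + 1 \<le> i - d" by (rule H3)
  then obtain q where q: "i = a + d + 1 + q" using h(1) by (metis add.commute add.assoc le_Suc_ex le_diff_conv2)
  have "l + a*p + b = (a + 1 + q)*p + 1" using h(2) q nab by simp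
  hence l: "l = c + 2 + q*p" unfolding pc by (simp add: algebra_simps)
  show ?thesis
    unfolding NN unfolding nab by (rule exI[of _ q]) (simp add: q l pc algebra_simps)
qed

lemma c2_U5: "2 \<le> b \<Longrightarrow> (d-1)*(N-1) \<ge> 1 \<Longrightarrow> \<not> inS ((a+1)*N + d) ((d-1)*(N-1) - 1)"
proof -
  assume b2: "2 \<le> b" and B1: "(d-1)*(N-1) \<ge> 1"
  define c where "c = p - b - 1"
  have pc: "p = b + c + 1" using bp by (simp add: c_def)
  have NN: "N = a*p + b + p*d" by (rule Nab)
  show ?thesis
  proof (rule U5_helper[of _ "a + d + 1" "c + 2" _ "a + d"])
    show "(a+1)*N + d = (a + d + 1)*n0 + (c + 2)*d" unfolding NN unfolding nab unfolding pc by (simp add: algebra_simps)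
    show "(a+1)*N + d + (d-1)*(N-1) = (a + d)*N + 1" using U3_gen[of "a+1"] d0 by simp
    show "a + d < a + d + 1" by simp
    show "(a + d + 1 - d)*p < c + 2 + n0" using nab pc by (simp add: algebra_simps)
  qed (rule B1)
qed

end

lemma sub_eq_sub: "(y::nat) \<le> x \<Longrightarrow> w \<le> z \<Longrightarrow> x + w = z + y \<Longrightarrow> x - y = z - w"
  by linarith

context carith begin

lemma main_generic:
  assumes L1: "\<And>l. l \<in> L \<Longrightarrow> l < p \<and> d \<le> i0 \<and> n0 \<le> (i0-d)*p + 1 \<and> (i0-d)*p < l + n0"
    and G2: "\<And>i l. l < p \<Longrightarrow> d \<le> i \<Longrightarrow> n0 \<le> (i-d)*p + 1 \<Longrightarrow> (i-d)*p < l + n0 \<Longrightarrow> i = i0 \<and> l \<in> L"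
    and finL: "finite L"
    and U1: "uvalid SS (int A, int B - 1)" and U3: "A + B = ju*N + 1" and U4: "A > 0"
    and U2: "\<And>i l. d \<le> i \<Longrightarrow> l + n0 = (i-d)*p + 1 \<Longrightarrow> \<exists>q. i*n0 + l*d = A + q*N \<and> i = ju + 1 + q"
    and U5: "B \<ge> 1 \<Longrightarrow> \<not> inS A (B - 1)"
  shows "minimally_generates_Der SS (GG (insert (1,0) (tgen i0 ` L)) {(0,1),(A,B)} :: ('k::field_char_0 pol2 \<Rightarrow> 'k pol2) set)"
proof -
  note UA = Ug_all[OF U1 U3 U4 U2 U5]
  interpret absder SS N "insert (1,0) (tgen i0 ` L)" "{(0,1),(A,B)}"
  proof (unfold_locales)
    show "(0,0) \<in> SS" using inS_00 by (simp add: SS_def)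
    show "s + s' \<in> SS" if "s \<in> SS" "s' \<in> SS" for s s'
      using that inS_add by (auto simp: SS_def)
    show "(N,0) \<in> SS" using inS_N0 by (simp add: SS_def)
    show "(0,N) \<in> SS" using inS_0N by (simp add: SS_def)
    show "N > 0" by (rule Npos)
    show "finite (insert (1,0) (tgen i0 ` L))" using finL by simp
    show "finite {(0::nat,1::nat),(A,B)}" by simp
    show "\<And>a b s. (a,b) \<in> insert (1,0) (tgen i0 ` L) \<Longrightarrow> s \<in> SS \<Longrightarrow> fst s > 0 \<Longrightarrow> (a + (fst s - 1), b + snd s) \<in> SS"
      using Tg_valid L1 by blast
    show "\<And>a b s. (a,b) \<in> {(0,1),(A,B)} \<Longrightarrow> s \<in> SS \<Longrightarrow> snd s > 0 \<Longrightarrow> (a + fst s, b + (snd s - 1)) \<in> SS"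
      by (rule UA(1))
    show "\<And>w. tvalid SS w \<Longrightarrow> \<exists>ab\<in>insert (1,0) (tgen i0 ` L). \<exists>s\<in>SS. w = (int (fst ab) - 1 + int (fst s), int (snd ab) + int (snd s))"
      using Tg_span G2 by blast
    show "\<And>w. uvalid SS w \<Longrightarrow> \<exists>ab\<in>{(0,1),(A,B)}. \<exists>s\<in>SS. w = (int (fst ab) + int (fst s), int (snd ab) - 1 + int (snd s))"
      by (rule UA(2))
    show "\<And>w. inSi SS (shift (N,0) w) \<Longrightarrow> inSi SS (shift (0,N) w) \<Longrightarrow> tvalid SS w \<and> uvalid SS w"
      by (rule full_generic)
    show "\<And>a b a' b' s. (a,b) \<in> insert (1,0) (tgen i0 ` L) \<Longrightarrow> (a',b') \<in> insert (1,0) (tgen i0 ` L) \<Longrightarrow> s \<in> SS \<Longrightarrow> (a' + fst s, b' + snd s) = (a, b) \<Longrightarrow> s = (0,0)"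
      using Tg_indep L1 by blast
    show "\<And>a b a' b' s. (a,b) \<in> {(0,1),(A,B)} \<Longrightarrow> (a',b') \<in> {(0,1),(A,B)} \<Longrightarrow> s \<in> SS \<Longrightarrow> (a' + fst s, b' + snd s) = (a, b) \<Longrightarrow> s = (0,0)"
      by (rule UA(3))
  qed
  show ?thesis by (rule abs_main)
qed

end

context arith begin

definition GS :: "(nat \<times> nat) set" where
  "GS = {(0, N)} \<union> {(n0 + i*d, N - (n0 + i*d)) | i. i \<le> p}"

lemma zero_sg: "(0::nat, 0::nat) \<in> sgrp_gen G"
  using sgrp_gen.zero[of G] by (simp add: zero_prod_def)

lemma pt_in: "l \<le> i*p \<Longrightarrow> (i*n0 + l*d, i*N - (i*n0 + l*d)) \<in> sgrp_gen GS"
proof (induction i arbitrary: l)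
  case 0 thus ?case using zero_sg by simp
next
  case (Suc i)
  define m where "m = min l p"
  have mp: "m \<le> p" by (simp add: m_def)
  have ml: "m \<le> l" by (simp add: m_def)
  define l' where "l' = l - m"
  have ll: "l = m + l'" using ml by (simp add: l'_def)
  have l'b: "l' \<le> i*p"
  proof (cases "l \<le> p")
    case True hence "m = l" by (simp add: m_def)
    thus ?thesis using ll by simp
  next
    case False hence "m = p" by (simp add: m_def)
    thus ?thesis using ll Suc.prems by simp
  qed
  have g: "(n0 + m*d, N - (n0 + m*d)) \<in> sgrp_gen GS"
    using mp by (intro sgrp_gen.gen) (auto simp: GS_def)
  have ih: "(i*n0 + l'*d, i*N - (i*n0 + l'*d)) \<in> sgrp_gen GS" using Suc.IH[OF l'b] .
  have b1: "n0 + m*d \<le> N" using mp by (simp add: N_def)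
  have b2: "i*n0 + l'*d \<le> i*N" using bnd[OF l'b] .
  have eq: "(Suc i*n0 + l*d, Suc i*N - (Suc i*n0 + l*d)) = (n0 + m*d, N - (n0 + m*d)) + (i*n0 + l'*d, i*N - (i*n0 + l'*d))"
    using b1 b2 ll by (simp add: algebra_simps)
  show ?case unfolding eq by (rule sgrp_gen.add[OF g ih])
qed

lemma zN_in: "(0, c*N) \<in> sgrp_gen GS"
proof (induction c)
  case 0 thus ?case using zero_sg by simp
next
  case (Suc c)
  have "(0::nat, N) \<in> sgrp_gen GS" by (intro sgrp_gen.gen) (simp add: GS_def)
  from sgrp_gen.add[OF this Suc.IH] show ?case by simp
qed

lemma S_char: "sgrp_gen GS = SS"
proof
  show "sgrp_gen GS \<subseteq> SS"
  proof
    fix z assume "z \<in> sgrp_gen GS"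
    thus "z \<in> SS"
    proof (induction rule: sgrp_gen.induct)
      case zero thus ?case using inS_00 by (simp add: SS_def zero_prod_def)
    next
      case (gen g) thus ?case using inS_0N inS_gen by (auto simp: GS_def SS_def)
    next
      case (add x y) thus ?case using inS_add by (auto simp: SS_def case_prod_unfold)
    qed
  qed
  show "SS \<subseteq> sgrp_gen GS"
  proof
    fix z assume "z \<in> SS"
    then obtain x y where z: "z = (x,y)" "inS x y" by (auto simp: SS_def)
    then obtain k i l where h: "i \<le> k" "l \<le> i*p" "x = i*n0 + l*d" "x + y = k*N" unfolding inS_def by blast
    have b: "i*n0 + l*d \<le> i*N" using bnd[OF h(2)] .
    have "i*N \<le> k*N" using h(1) by simp
    hence eq: "z = (i*n0 + l*d, i*N - (i*n0 + l*d)) + (0, (k - i)*N)"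
      using z(1) h(3,4) b h(1) by (simp add: diff_mult_distrib)
    show "z \<in> sgrp_gen GS" unfolding eq by (rule sgrp_gen.add[OF pt_in[OF h(2)] zN_in])
  qed
qed

end

lemma smul_sg: "(g::nat) \<in> G \<Longrightarrow> k * g \<in> sgrp_gen G"
proof (induction k)
  case 0 thus ?case using sgrp_gen.zero[of G] by simp
next
  case (Suc k) thus ?case using sgrp_gen.add[OF sgrp_gen.gen[OF Suc.prems] Suc.IH] by simp
qed

lemma cop_from_Gcd:
  assumes nd: "\<And>i. n i = n0 + i * d" and G: "Gcd (n ` {0..p}) = (1::nat)"
  shows "coprime n0 d"
proof -
  have "gcd n0 d dvd x" if "x \<in> n ` {0..p}" for x
    using that nd by (auto intro!: dvd_add dvd_mult)
  hence "gcd n0 d dvd Gcd (n ` {0..p})" by (rule Gcd_greatest)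
  hence "gcd n0 d = 1" using G by simp
  thus ?thesis by (simp add: coprime_iff_gcd_eq_1)
qed

lemma np_from_min:
  assumes nd: "\<And>i. n i = n0 + i * d" and n0: "n0 > 0"
    and M: "\<forall>i\<in>{0..p}. n i \<notin> sgrp_gen (n ` ({0..p} - {i}))"
  shows "n0 > (p::nat)"
proof (rule ccontr)
  assume "\<not> n0 > p"
  hence i: "n0 \<in> {0..p}" by simp
  have "n 0 \<in> n ` ({0..p} - {n0})" using n0 by auto
  hence "Suc d * n 0 \<in> sgrp_gen (n ` ({0..p} - {n0}))" by (rule smul_sg)
  moreover have "Suc d * n 0 = n n0" using nd by (simp add: algebra_simps)
  ultimately show False using M i by auto
qed

lemma compr_eq:
  assumes "\<And>i. P i \<Longrightarrow> h i \<in> L \<and> T (h i) = (F i, G i)" and "\<And>l. l \<in> L \<Longrightarrow> \<exists>i. P i \<and> h i = l"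
  shows "{vf_t (F i) (G i) | i. P i} = (\<lambda>(x,y). vf_t x y) ` T ` L"
proof
  show "{vf_t (F i) (G i) | i. P i} \<subseteq> (\<lambda>(x,y). vf_t x y) ` T ` L"
  proof
    fix g assume "g \<in> {vf_t (F i) (G i) | i. P i}"
    then obtain i where i: "P i" "g = vf_t (F i) (G i)" by blast
    hence "g = (\<lambda>(x,y). vf_t x y) (T (h i))" using assms(1)[OF i(1)] by simp
    thus "g \<in> (\<lambda>(x,y). vf_t x y) ` T ` L" using assms(1)[OF i(1)] by blast
  qed
  show "(\<lambda>(x,y). vf_t x y) ` T ` L \<subseteq> {vf_t (F i) (G i) | i. P i}"
  proof
    fix g assume "g \<in> (\<lambda>(x,y). vf_t x y) ` T ` L"
    then obtain l where l: "l \<in> L" "g = (\<lambda>(x,y). vf_t x y) (T l)" by blast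
    from assms(2)[OF l(1)] obtain i where i: "P i" "h i = l" by blast
    have "g = vf_t (F i) (G i)" using l(2) assms(1)[OF i(1)] i(2) by simp
    thus "g \<in> {vf_t (F i) (G i) | i. P i}" using i(1) by blast
  qed
qed

context carith begin

lemma a1: "a \<ge> 1"
proof (rule ccontr)
  assume "\<not> a \<ge> 1" hence "a = 0" by simp
  thus False using nab bp np by simp
qed

lemma c0_tg:
  assumes b0: "b = 0" and i: "1 \<le> i" "i \<le> p - 1"
  shows "tgen (a+d) i = (a*N + 1 - (n0 + (p - i)*d), d*(N - i))"
proof -
  have n: "n0 = a*p" using nab b0 by simp
  have NN: "N = (a+d)*p" using Nab b0 by (simp add: algebra_simps)
  define r where "r = p - i"
  have pr: "p = i + r" using i p2 by (simp add: r_def)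
  have ip: "i < p" using i p2 by simp
  have L: "i < p \<and> d \<le> a + d \<and> n0 \<le> (a + d - d)*p + 1 \<and> (a + d - d)*p < i + n0"
    using c0_L1[OF b0, of i] i by simp
  have gt: "(a+d)*n0 + i*d > N" using tgen_facts(1)[of i "a+d"] L by simp
  have le2: "n0 + (p - i)*d \<le> a*N + 1"
  proof -
    have "n0 + (p - i)*d \<le> N" by (simp add: N_def)
    also have "N \<le> a*N" using a1 by simp
    finally show ?thesis by simp
  qed
  have f: "(a+d)*n0 + i*d + 1 - N = a*N + 1 - (n0 + (p - i)*d)"
  proof (rule sub_eq_sub)
    show "N \<le> (a+d)*n0 + i*d + 1" using gt by simp
    show "n0 + (p - i)*d \<le> a*N + 1" by (rule le2)
    show "(a+d)*n0 + i*d + 1 + (n0 + (p - i)*d) = a*N + 1 + N"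
      unfolding NN unfolding n unfolding r_def[symmetric] unfolding pr by (simp add: algebra_simps)
  qed
  have s: "((a+d)*p - i)*d = d*(N - i)" unfolding NN by (simp add: mult.commute)
  show ?thesis using f s by (simp add: tgen_def)
qed

lemma c1_tg:
  assumes b1: "b = 1" and i: "1 \<le> i" "i \<le> p"
  shows "tgen (a+d) (i - 1) = (a*N + 1 - (n0 + (p - i)*d), d*(N - i))"
proof -
  have n: "n0 = a*p + 1" using nab b1 by simp
  have NN: "N = (a+d)*p + 1" using Nab b1 by (simp add: algebra_simps)
  define l where "l = i - 1"
  have il: "i = l + 1" using i by (simp add: l_def)
  define r where "r = p - i"
  have pr: "p = l + 1 + r" using i il by (simp add: r_def)
  have L: "l < p \<and> d \<le> a + d \<and> n0 \<le> (a + d - d)*p + 1 \<and> (a + d - d)*p < l + n0"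
    using c1_L1[OF b1, of l] i il by simp
  have gt: "(a+d)*n0 + l*d > N" using tgen_facts(1)[of l "a+d"] L by simp
  have le2: "n0 + (p - i)*d \<le> a*N + 1"
  proof -
    have "n0 + (p - i)*d \<le> N" by (simp add: N_def)
    also have "N \<le> a*N" using a1 by simp
    finally show ?thesis by simp
  qed
  have f: "(a+d)*n0 + l*d + 1 - N = a*N + 1 - (n0 + (p - i)*d)"
  proof (rule sub_eq_sub)
    show "N \<le> (a+d)*n0 + l*d + 1" using gt by simp
    show "n0 + (p - i)*d \<le> a*N + 1" by (rule le2)
    show "(a+d)*n0 + l*d + 1 + (n0 + (p - i)*d) = a*N + 1 + N"
      unfolding NN unfolding n unfolding r_def[symmetric] unfolding pr by (simp add: algebra_simps)
  qed
  have s: "((a+d)*p - l)*d = d*(N - i)" unfolding NN il by (simp add: mult.commute)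
  show ?thesis using f s by (simp add: tgen_def l_def)
qed

lemma c2_tg:
  assumes b2: "2 \<le> b" and i: "1 \<le> i" "i \<le> b - 1"
  shows "tgen (a+d+1) (p - b + i) = (a*N + i*d + 1, d*(N - i))"
proof -
  define c where "c = p - b - 1"
  have pc: "p = b + c + 1" using bp by (simp add: c_def)
  have NN: "N = a*p + b + p*d" by (rule Nab)
  have pbi: "p - b + i = c + 1 + i" using pc by simp
  have f: "(a+d+1)*n0 + (p - b + i)*d + 1 - N = a*N + i*d + 1"
  proof -
    have "(a+d+1)*n0 + (p - b + i)*d + 1 = a*N + i*d + 1 + N"
      unfolding NN unfolding nab unfolding pbi unfolding pc by (simp add: algebra_simps)
    thus ?thesis by simp
  qed
  have s: "((a+d+1)*p - (p - b + i))*d = d*(N - i)"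
  proof -
    have "(a+d+1)*p - (p - b + i) = N - i" unfolding NN pbi unfolding pc using i b2
      by (simp add: algebra_simps)
    thus ?thesis by (simp add: mult.commute)
  qed
  show ?thesis using f s by (simp add: tgen_def)
qed

end

theorem theorem4p5:
  fixes n :: "nat \<Rightarrow> nat" and n0 d p a b :: nat and S :: "(nat \<times> nat) set"
  assumes "p \<ge> 2" and "n0 > 0" and "d > 0"
    and n_def: "\<And>i. n i = n0 + i * d"
    and "Gcd (n ` {0..p}) = 1"
    and "\<forall>i\<in>{0..p}. n i \<notin> sgrp_gen (n ` ({0..p} - {i}))"
    and S_def: "S = sgrp_gen ({(0, n p)} \<union> {(n i, n p - n i) | i. i \<le> p})"
    and a_def: "a = n0 div p" and b_def: "b = n0 mod p"
  shows
    "(b = 0 \<longrightarrow> minimally_generates_Der S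
        ({vf_u 0 1, vf_u (a * n p + d) ((d - 1) * (n p - 1)), vf_t 1 0}
         \<union> {vf_t (a * n p + 1 - n (p - i)) (d * (n p - i)) | i. 1 \<le> i \<and> i \<le> p - 1}
         :: ('k::field_char_0 pol2 \<Rightarrow> 'k pol2) set))
   \<and> (b = 1 \<longrightarrow> minimally_generates_Der S
        ({vf_u 0 1, vf_u (a * n p + d) ((d - 1) * (n p - 1)), vf_t 1 0}
         \<union> {vf_t (a * n p + 1 - n (p - i)) (d * (n p - i)) | i. 1 \<le> i \<and> i \<le> p}
         :: ('k::field_char_0 pol2 \<Rightarrow> 'k pol2) set))
   \<and> (b \<noteq> 0 \<and> b \<noteq> 1 \<longrightarrow> minimally_generates_Der S
        ({vf_u 0 1, vf_u ((a + 1) * n p + d) ((d - 1) * (n p - 1)), vf_t 1 0}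
         \<union> {vf_t (a * n p + i * d + 1) (d * (n p - i)) | i. 1 \<le> i \<and> i \<le> b - 1}
         :: ('k::field_char_0 pol2 \<Rightarrow> 'k pol2) set))"
proof -
  note p2 = assms(1) and n00 = assms(2) and d0 = assms(3) and G = assms(5) and M = assms(6)
  have cop: "coprime n0 d" using cop_from_Gcd[OF n_def G] .
  have np: "n0 > p" using np_from_min[OF n_def n00 M] .
  have p0: "p > 0" using p2 by simp
  interpret carith n0 d p a b
  proof unfold_locales
    show "2 \<le> p" by (rule p2)
    show "0 < d" by (rule d0)
    show "p < n0" by (rule np)
    show "coprime n0 d" by (rule cop)
    show "n0 = a*p + b" using a_def b_def by simp
    show "b < p" using b_def p0 by simp
  qed
  have Nn: "n p = N" using n_def by (simp add: N_def)
  have SS: "S = SS"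
  proof -
    have "{(0, n p)} \<union> {(n i, n p - n i) | i. i \<le> p} = GS"
      unfolding GS_def Nn unfolding n_def by blast
    thus ?thesis using S_def S_char by simp
  qed
  have GGeq: "GG (insert (1,0) (tgen i0 ` L)) {(0,1),(A,B)} =
     ({vf_u 0 1, vf_u A B, vf_t 1 0} \<union> (\<lambda>(x,y). vf_t x y) ` tgen i0 ` L :: ('k pol2 \<Rightarrow> 'k pol2) set)"
    for i0 L A B
    unfolding GG_def by auto
  show ?thesis
  proof (intro conjI impI)
    assume b0: "b = 0"
    let ?L = "{l. 1 \<le> l \<and> l \<le> p - 1}"
    have ce: "{vf_t (a * n p + 1 - n (p - i)) (d * (n p - i)) | i. 1 \<le> i \<and> i \<le> p - 1} =
       ((\<lambda>(x,y). vf_t x y) ` tgen (a+d) ` ?L :: ('k pol2 \<Rightarrow> 'k pol2) set)"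
      unfolding Nn unfolding n_def
      by (rule compr_eq[where h = id]) (use c0_tg[OF b0] in auto)
    have mg: "minimally_generates_Der SS (GG (insert (1,0) (tgen (a+d) ` ?L)) {(0,1),(a*N + d,(d-1)*(N-1))} :: ('k pol2 \<Rightarrow> 'k pol2) set)"
    proof (rule main_generic)
      show "\<And>l. l \<in> ?L \<Longrightarrow> l < p \<and> d \<le> a + d \<and> n0 \<le> (a + d - d)*p + 1 \<and> (a + d - d)*p < l + n0"
        by (rule c0_L1[OF b0])
      show "\<And>i l. l < p \<Longrightarrow> d \<le> i \<Longrightarrow> n0 \<le> (i-d)*p + 1 \<Longrightarrow> (i-d)*p < l + n0 \<Longrightarrow> i = a + d \<and> l \<in> ?L"
        using c0_G2[OF b0] by blast
      show "finite ?L" by simp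
      show "uvalid SS (int (a*N + d), int ((d-1)*(N-1)) - 1)" by (rule c0_U1[OF b0])
      show "a*N + d + (d-1)*(N-1) = (a + d - 1)*N + 1" by (rule U3_gen)
      show "a*N + d > 0" using d0 by simp
      show "\<And>i l. d \<le> i \<Longrightarrow> l + n0 = (i-d)*p + 1 \<Longrightarrow> \<exists>q. i*n0 + l*d = a*N + d + q*N \<and> i = (a + d - 1) + 1 + q"
        using c0_U2[OF b0] by blast
      show "(d-1)*(N-1) \<ge> 1 \<Longrightarrow> \<not> inS (a*N + d) ((d-1)*(N-1) - 1)" by (rule c0_U5[OF b0])
    qed
    show "minimally_generates_Der S
        ({vf_u 0 1, vf_u (a * n p + d) ((d - 1) * (n p - 1)), vf_t 1 0}
         \<union> {vf_t (a * n p + 1 - n (p - i)) (d * (n p - i)) | i. 1 \<le> i \<and> i \<le> p - 1}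
         :: ('k::field_char_0 pol2 \<Rightarrow> 'k pol2) set)"
      unfolding SS ce unfolding Nn using mg unfolding GGeq by simp
  next
    assume b1: "b = 1"
    let ?L = "{l. l \<le> p - 1}"
    have ce: "{vf_t (a * n p + 1 - n (p - i)) (d * (n p - i)) | i. 1 \<le> i \<and> i \<le> p} =
       ((\<lambda>(x,y). vf_t x y) ` tgen (a+d) ` ?L :: ('k pol2 \<Rightarrow> 'k pol2) set)"
      unfolding Nn unfolding n_def
    proof (rule compr_eq[where h = "\<lambda>i. i - 1"])
      show "\<And>i. 1 \<le> i \<and> i \<le> p \<Longrightarrow> i - 1 \<in> ?L \<and> tgen (a+d) (i - 1) = (a * N + 1 - (n0 + (p - i) * d), d * (N - i))"
        using c1_tg[OF b1] by auto
      fix l assume "l \<in> ?L"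
      thus "\<exists>i. (1 \<le> i \<and> i \<le> p) \<and> i - 1 = l"
        using p2 by (intro exI[of _ "l + 1"]) auto
    qed
    have mg: "minimally_generates_Der SS (GG (insert (1,0) (tgen (a+d) ` ?L)) {(0,1),(a*N + d,(d-1)*(N-1))} :: ('k pol2 \<Rightarrow> 'k pol2) set)"
    proof (rule main_generic)
      show "\<And>l. l \<in> ?L \<Longrightarrow> l < p \<and> d \<le> a + d \<and> n0 \<le> (a + d - d)*p + 1 \<and> (a + d - d)*p < l + n0"
        by (rule c1_L1[OF b1])
      show "\<And>i l. l < p \<Longrightarrow> d \<le> i \<Longrightarrow> n0 \<le> (i-d)*p + 1 \<Longrightarrow> (i-d)*p < l + n0 \<Longrightarrow> i = a + d \<and> l \<in> ?L"
        using c1_G2[OF b1] by blast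
      show "finite ?L" by simp
      show "uvalid SS (int (a*N + d), int ((d-1)*(N-1)) - 1)" by (rule c1_U1[OF b1])
      show "a*N + d + (d-1)*(N-1) = (a + d - 1)*N + 1" by (rule U3_gen)
      show "a*N + d > 0" using d0 by simp
      show "\<And>i l. d \<le> i \<Longrightarrow> l + n0 = (i-d)*p + 1 \<Longrightarrow> \<exists>q. i*n0 + l*d = a*N + d + q*N \<and> i = (a + d - 1) + 1 + q"
        using c1_U2[OF b1] by blast
      show "(d-1)*(N-1) \<ge> 1 \<Longrightarrow> \<not> inS (a*N + d) ((d-1)*(N-1) - 1)" by (rule c1_U5[OF b1])
    qed
    show "minimally_generates_Der S
        ({vf_u 0 1, vf_u (a * n p + d) ((d - 1) * (n p - 1)), vf_t 1 0}
         \<union> {vf_t (a * n p + 1 - n (p - i)) (d * (n p - i)) | i. 1 \<le> i \<and> i \<le> p}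
         :: ('k::field_char_0 pol2 \<Rightarrow> 'k pol2) set)"
      unfolding SS ce unfolding Nn using mg unfolding GGeq by simp
  next
    assume bb: "b \<noteq> 0 \<and> b \<noteq> 1"
    hence b2: "2 \<le> b" by simp
    let ?L = "{l. p - b + 1 \<le> l \<and> l \<le> p - 1}"
    have ce: "{vf_t (a * n p + i * d + 1) (d * (n p - i)) | i. 1 \<le> i \<and> i \<le> b - 1} =
       ((\<lambda>(x,y). vf_t x y) ` tgen (a+d+1) ` ?L :: ('k pol2 \<Rightarrow> 'k pol2) set)"
      unfolding Nn
    proof (rule compr_eq[where h = "\<lambda>i. p - b + i"])
      show "\<And>i. 1 \<le> i \<and> i \<le> b - 1 \<Longrightarrow> p - b + i \<in> ?L \<and> tgen (a+d+1) (p - b + i) = (a * N + i * d + 1, d * (N - i))"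
        using c2_tg[OF b2] bp by auto
      fix l assume "l \<in> ?L"
      thus "\<exists>i. (1 \<le> i \<and> i \<le> b - 1) \<and> p - b + i = l"
        using bp by (intro exI[of _ "l - (p - b)"]) auto
    qed
    have mg: "minimally_generates_Der SS (GG (insert (1,0) (tgen (a+d+1) ` ?L)) {(0,1),((a+1)*N + d,(d-1)*(N-1))} :: ('k pol2 \<Rightarrow> 'k pol2) set)"
    proof (rule main_generic)
      show "\<And>l. l \<in> ?L \<Longrightarrow> l < p \<and> d \<le> a + d + 1 \<and> n0 \<le> (a + d + 1 - d)*p + 1 \<and> (a + d + 1 - d)*p < l + n0"
        by (rule c2_L1[OF b2])
      show "\<And>i l. l < p \<Longrightarrow> d \<le> i \<Longrightarrow> n0 \<le> (i-d)*p + 1 \<Longrightarrow> (i-d)*p < l + n0 \<Longrightarrow> i = a + d + 1 \<and> l \<in> ?L"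
        using c2_G2[OF b2] by blast
      show "finite ?L" by simp
      show "uvalid SS (int ((a+1)*N + d), int ((d-1)*(N-1)) - 1)" by (rule c2_U1[OF b2])
      show "(a+1)*N + d + (d-1)*(N-1) = (a + d)*N + 1" using U3_gen[of "a+1"] d0 by simp
      show "(a+1)*N + d > 0" using d0 by simp
      show "\<And>i l. d \<le> i \<Longrightarrow> l + n0 = (i-d)*p + 1 \<Longrightarrow> \<exists>q. i*n0 + l*d = (a+1)*N + d + q*N \<and> i = (a + d) + 1 + q"
        using c2_U2[OF b2] by blast
      show "(d-1)*(N-1) \<ge> 1 \<Longrightarrow> \<not> inS ((a+1)*N + d) ((d-1)*(N-1) - 1)" by (rule c2_U5[OF b2])
    qed
    show "minimally_generates_Der S
        ({vf_u 0 1, vf_u ((a + 1) * n p + d) ((d - 1) * (n p - 1)), vf_t 1 0}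
         \<union> {vf_t (a * n p + i * d + 1) (d * (n p - i)) | i. 1 \<le> i \<and> i \<le> b - 1}
         :: ('k::field_char_0 pol2 \<Rightarrow> 'k pol2) set)"
      unfolding SS ce unfolding Nn using mg unfolding GGeq by simp
  qed
qed

end
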